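(* Let $m,n\ge1$. An $(m+2)$-angulation of the once-punctured polygon $P_n^\bullet$ exists if and only if $n=m\ell$ for some integer $\ell\ge1$. If $n=m\ell$, then for every $(m+2)$-angulation $T$ of $P_n^\bullet$, the complement $P_n^\bullet\setminus T$ has exactly $\ell$ connected components.
   Context: $P_n^\bullet$ is a disc with $n$ marked points on its boundary and one marked point $\bullet$ (the puncture) in its interior. An arc is a non-self-intersecting curve with endpoints at marked points, interior avoiding marked points, up to isotopy, not isotopic to a boundary segment or contractible; arcs are non-crossing if they have non-crossing representatives. An $(m+2)$-angulation of $P_n^\bullet$ is a set $T$ of pairwise non-crossing arcs such that every connected component of $P_n^\bullet\setminus T$ is an $(m+2)$-gon (sides counted with multiplicity). *)

theory Defs
  imports Complex_Main
begin

text \<open>Combinatorial model of the once-punctured polygon P_n with boundary marked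
points 0,...,n-1 (counterclockwise) and the puncture in the interior.

Isotopy classes of arcs:
  Ch i k  (i < n, 2 <= k <= n): arc between boundary points i and (i+k) mod n such that
          the side NOT containing the puncture contains exactly the k boundary segments
          going counterclockwise from i to i+k (k = n: the loop at i enclosing the puncture);
  Sp i    (i < n): the arc from boundary point i to the puncture.
Crossing is computed in the universal cover of the punctured disc (boundary = integer line,
the puncture at infinity): Ch i k lifts to the intervals [i+tn, i+k+tn], Sp j to rays at j+sn.\<close>

datatype arc = Ch nat nat | Sp nat

definition is_arc :: "nat \<Rightarrow> arc \<Rightarrow> bool" where
  "is_arc n a = (case a of Ch i k \<Rightarrow> i < n \<and> 2 \<le> k \<and> k \<le> n | Sp i \<Rightarrow> i < n)"

fun crosses :: "nat \<Rightarrow> arc \<Rightarrow> arc \<Rightarrow> bool" where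
  "crosses n (Ch i k) (Ch j l) =
     (\<exists>s t :: int. let a = int i + t * int n; b = a + int k;
                       c = int j + s * int n; d = c + int l
                   in (a < c \<and> c < b \<and> b < d) \<or> (c < a \<and> a < d \<and> d < b))"
| "crosses n (Ch i k) (Sp j) = (\<exists>s :: int. int i < int j + s * int n \<and> int j + s * int n < int i + int k)"
| "crosses n (Sp j) (Ch i k) = (\<exists>s :: int. int i < int j + s * int n \<and> int j + s * int n < int i + int k)"
| "crosses n (Sp i) (Sp j) = False"

text \<open>The embedded graph formed by the boundary segments and the arcs of T, encoded as a
combinatorial map. Darts (oriented edges) with the interior face on their left:
  Out i d : leaves boundary point i; d > 0 runs along Ch i d (d = 1: boundary segment i -> i+1),
            d < 0 runs backwards along the chord Ch ((i+d) mod n) (-d);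
  Up i / Down i : the spoke Sp i towards / away from the puncture.\<close>

datatype vtx = V nat | Pu

datatype dart = Out nat int | Up nat | Down nat

definition bmod :: "nat \<Rightarrow> int \<Rightarrow> nat" where
  "bmod n x = nat (x mod int n)"

fun dhead :: "nat \<Rightarrow> dart \<Rightarrow> vtx" where
  "dhead n (Out i d) = V (bmod n (int i + d))"
| "dhead n (Up i) = Pu"
| "dhead n (Down i) = V i"

fun dsrc :: "dart \<Rightarrow> vtx" where
  "dsrc (Out i d) = V i"
| "dsrc (Up i) = V i"
| "dsrc (Down i) = Pu"

fun drev :: "nat \<Rightarrow> dart \<Rightarrow> dart" where
  "drev n (Out i d) = Out (bmod n (int i + d)) (- d)"
| "drev n (Up i) = Down i"
| "drev n (Down i) = Up i"

text \<open>Angular key at a boundary vertex (counterclockwise = increasing key): boundary segment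
forward, chords to i+2,...,i+n, the spoke, chords from i-n,...,i-2, boundary segment backward.\<close>
fun dkey :: "dart \<Rightarrow> real" where
  "dkey (Out i d) = - 1 / of_int d"
| "dkey (Up i) = 0"
| "dkey (Down i) = 0"

definition darts :: "nat \<Rightarrow> arc set \<Rightarrow> dart set" where
  "darts n T =
     {Out i 1 | i. i < n}
     \<union> {Out i (int k) | i k. Ch i k \<in> T}
     \<union> {Out (bmod n (int i + int k)) (- int k) | i k. Ch i k \<in> T}
     \<union> {Up i | i. Sp i \<in> T} \<union> {Down i | i. Sp i \<in> T}"

text \<open>Directions at boundary vertex v (including the backward boundary segment).\<close>
definition rot :: "nat \<Rightarrow> arc set \<Rightarrow> nat \<Rightarrow> dart set" where
  "rot n T v = {e \<in> darts n T. dsrc e = V v} \<union> {Out v (-1)}"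

text \<open>Face-tracing permutation: after arriving at a vertex, continue along the next
edge in clockwise order from the edge one arrived on.\<close>
definition nxt :: "nat \<Rightarrow> arc set \<Rightarrow> dart \<Rightarrow> dart" where
  "nxt n T d =
     (case dhead n d of
        V v \<Rightarrow> (THE x. x \<in> rot n T v \<and> dkey x < dkey (drev n d) \<and>
                    (\<forall>y \<in> rot n T v. dkey y < dkey (drev n d) \<longrightarrow> dkey y \<le> dkey x))
      | Pu \<Rightarrow> (case d of
                 Up i \<Rightarrow> Down (if (\<exists>j. Sp j \<in> T \<and> j < i) then Max {j. Sp j \<in> T \<and> j < i}
                                 else Max {j. Sp j \<in> T})
               | _ \<Rightarrow> d))"

text \<open>The face (region of the complement) containing dart d; its number of elements is
the number of its sides counted with multiplicity.\<close>
definition face :: "nat \<Rightarrow> arc set \<Rightarrow> dart \<Rightarrow> dart set" where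
  "face n T d = {(nxt n T ^^ k) d | k. True}"

definition faces :: "nat \<Rightarrow> arc set \<Rightarrow> dart set set" where
  "faces n T = face n T ` darts n T"

text \<open>(m+2)-angulation: pairwise non-crossing arcs, every region is a polygon (which forces
the puncture to be an endpoint of some arc, otherwise its region is a punctured polygon)
and every region has exactly m+2 sides counted with multiplicity.\<close>
definition angulation :: "nat \<Rightarrow> nat \<Rightarrow> arc set \<Rightarrow> bool" where
  "angulation m n T \<longleftrightarrow>
     T \<subseteq> {a. is_arc n a}
     \<and> (\<forall>a \<in> T. \<forall>b \<in> T. a \<noteq> b \<longrightarrow> \<not> crosses n a b)
     \<and> (\<exists>i. Sp i \<in> T)
     \<and> (\<forall>F \<in> faces n T. card F = m + 2)"

end

theory Submission
  imports Defs
begin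

lemma int_bmod: "1 \<le> n \<Longrightarrow> int (bmod n x) = x mod int n"
  unfolding bmod_def by simp

lemma bmod_lt: "1 \<le> n \<Longrightarrow> bmod n x < n"
  unfolding bmod_def by (simp add: nat_less_iff)

lemma inv_lt: fixes p q :: int assumes "0<p" "0<q" shows "1/real_of_int p < 1/real_of_int q \<longleftrightarrow> q < p"
  using assms by (simp add: divide_simps)
lemma inv_le: fixes p q :: int assumes "0<p" "0<q" shows "1/real_of_int p \<le> 1/real_of_int q \<longleftrightarrow> q \<le> p"
  using assms by (simp add: divide_simps)

locale PT =
  fixes n :: nat and T :: "arc set"
  assumes npos: "1 \<le> n"
    and arcsT: "T \<subseteq> {a. is_arc n a}"
    and ncT: "\<And>a b. a \<in> T \<Longrightarrow> b \<in> T \<Longrightarrow> a \<noteq> b \<Longrightarrow> \<not> crosses n a b"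
    and spT: "\<exists>i. Sp i \<in> T"
begin

lemma chT: "Ch i k \<in> T \<Longrightarrow> i < n \<and> 2 \<le> k \<and> k \<le> n"
  using arcsT by (auto simp: is_arc_def)

lemma spT': "Sp i \<in> T \<Longrightarrow> i < n"
  using arcsT by (auto simp: is_arc_def)

lemma crossCC:
  fixes c d :: int
  assumes "Ch i k \<in> T" "Ch j l \<in> T" "(i,k) \<noteq> (j,l)"
    "c mod int n = int i" "d mod int n = int j" "c < d" "d < c + int k" "c + int k < d + int l"
  shows False
proof -
  have c: "c = int i + (c div int n) * int n" using assms(4) by (metis mult.commute mod_div_mult_eq add.commute)
  have d: "d = int j + (d div int n) * int n" using assms(5) by (metis mult.commute mod_div_mult_eq add.commute)
  have "crosses n (Ch i k) (Ch j l)"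
    apply (simp add: Let_def)
    apply (rule exI[of _ "d div int n"], rule exI[of _ "c div int n"])
    using assms(6-8) c d by linarith
  with ncT[OF assms(1,2)] assms(3) show False by auto
qed

lemma crossCS:
  fixes c x :: int
  assumes "Ch i k \<in> T" "Sp j \<in> T"
    "c mod int n = int i" "x mod int n = int j" "c < x" "x < c + int k"
  shows False
proof -
  have c: "c = int i + (c div int n) * int n" using assms(3) by (metis mult.commute mod_div_mult_eq add.commute)
  have d: "x = int j + (x div int n) * int n" using assms(4) by (metis mult.commute mod_div_mult_eq add.commute)
  have "crosses n (Ch i k) (Sp j)"
    apply simp
    apply (rule exI[of _ "x div int n - c div int n"])
    using assms(5-6) c d by (simp add: algebra_simps)
  with ncT[OF assms(1,2)] show False by auto
qed


lemma darts_Out: "Out a e \<in> darts n T \<longleftrightarrow> a < n \<and> (e = 1 \<or> (e \<ge> 2 \<and> Ch a (nat e) \<in> T)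
   \<or> (e \<le> -2 \<and> Ch (bmod n (int a + e)) (nat (-e)) \<in> T))"
proof
  assume "Out a e \<in> darts n T"
  then consider "a < n" "e = 1" | k where "Ch a k \<in> T" "e = int k"
    | i k where "Ch i k \<in> T" "a = bmod n (int i + int k)" "e = - int k"
    unfolding darts_def by auto
  then show "a < n \<and> (e = 1 \<or> (e \<ge> 2 \<and> Ch a (nat e) \<in> T)
   \<or> (e \<le> -2 \<and> Ch (bmod n (int a + e)) (nat (-e)) \<in> T))"
  proof cases
    case 1 then show ?thesis by simp
  next
    case 2 then show ?thesis using chT[OF 2(1)] by simp
  next
    case 3
    have "bmod n (int a + e) = i"
      using 3 chT[OF 3(1)] npos unfolding bmod_def by (simp add: mod_diff_left_eq)
    then show ?thesis using 3 chT[OF 3(1)] bmod_lt[OF npos] by simp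
  qed
next
  assume h: "a < n \<and> (e = 1 \<or> (e \<ge> 2 \<and> Ch a (nat e) \<in> T)
   \<or> (e \<le> -2 \<and> Ch (bmod n (int a + e)) (nat (-e)) \<in> T))"
  then consider "a < n" "e = 1" | "e \<ge> 2" "Ch a (nat e) \<in> T"
    | "e \<le> -2" "a < n" "Ch (bmod n (int a + e)) (nat (-e)) \<in> T" by auto
  then show "Out a e \<in> darts n T"
  proof cases
    case 1 then show ?thesis unfolding darts_def by auto
  next
    case 2 then show ?thesis unfolding darts_def by (auto intro!: exI[of _ "nat e"])
  next
    case 3
    have "bmod n (int (bmod n (int a + e)) + int (nat (-e))) = a"
      using 3 npos unfolding bmod_def by (simp add: mod_diff_left_eq)
    then have "Out a e = Out (bmod n (int (bmod n (int a + e)) + int (nat (-e)))) (- int (nat (-e)))"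
      using 3 by simp
    then have "Out a e \<in> {Out (bmod n (int i + int k)) (- int k) | i k. Ch i k \<in> T}"
      using 3(3) by blast
    then show ?thesis unfolding darts_def by blast
  qed
qed

lemma darts_Up: "Up a \<in> darts n T \<longleftrightarrow> Sp a \<in> T"
  unfolding darts_def by auto

lemma darts_Down: "Down a \<in> darts n T \<longleftrightarrow> Sp a \<in> T"
  unfolding darts_def by auto

lemma rot_iff: "x \<in> rot n T v \<longleftrightarrow> (x \<in> darts n T \<and> dsrc x = V v) \<or> x = Out v (-1)"
  unfolding rot_def by auto

lemma rot_cases:
  assumes "x \<in> rot n T v"
  obtains e where "x = Out v e" "Out v e \<in> darts n T" | "x = Out v (-1)" | "x = Up v" "Sp v \<in> T"
proof -
  from assms have "(x \<in> darts n T \<and> dsrc x = V v) \<or> x = Out v (-1)" by (simp add: rot_iff)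
  then show ?thesis
  proof
    assume h: "x \<in> darts n T \<and> dsrc x = V v"
    show ?thesis
    proof (cases x)
      case (Out a e) then show ?thesis using h that by auto
    next
      case (Up a) then show ?thesis using h that by (auto simp: darts_Up)
    next
      case (Down a) then show ?thesis using h by auto
    qed
  qed (use that in auto)
qed

lemma Out_nz: "Out a e \<in> darts n T \<Longrightarrow> e \<noteq> 0"
  by (auto simp: darts_Out)

lemma key_inj:
  assumes "x \<in> rot n T v" "y \<in> rot n T v" "dkey x = dkey y"
  shows "x = y"
proof -
  have A: "(\<exists>e. x = Out v e \<and> e \<noteq> 0) \<or> x = Up v"
    using assms(1)
  proof (cases rule: rot_cases)
    case (1 e) then show ?thesis using Out_nz by blast
  qed simp_all
  have B: "(\<exists>e. y = Out v e \<and> e \<noteq> 0) \<or> y = Up v"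
    using assms(2)
  proof (cases rule: rot_cases)
    case (1 e) then show ?thesis using Out_nz by blast
  qed simp_all
  show ?thesis
  proof (cases "x = Up v")
    case True
    show ?thesis
    proof (cases "y = Up v")
      case False
      then obtain e where "y = Out v e" "e \<noteq> 0" using B by blast
      then show ?thesis using assms(3) True by simp
    qed (use True in simp)
  next
    case False
    then obtain e where e: "x = Out v e" "e \<noteq> 0" using A by blast
    show ?thesis
    proof (cases "y = Up v")
      case True
      then show ?thesis using assms(3) e by simp
    next
      case False
      then obtain e2 where "y = Out v e2" "e2 \<noteq> 0" using B by blast
      then show ?thesis using assms(3) e by simp
    qed
  qed
qed


lemma nxt_V:
  assumes "dhead n d = V v" "x \<in> rot n T v" "dkey x < dkey (drev n d)"
    "\<And>y. y \<in> rot n T v \<Longrightarrow> dkey y < dkey (drev n d) \<Longrightarrow> dkey y \<le> dkey x"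
  shows "nxt n T d = x"
  unfolding nxt_def assms(1) vtx.case
proof (rule the_equality)
  show "x \<in> rot n T v \<and> dkey x < dkey (drev n d) \<and>
    (\<forall>y\<in>rot n T v. dkey y < dkey (drev n d) \<longrightarrow> dkey y \<le> dkey x)" using assms by auto
next
  fix y assume h: "y \<in> rot n T v \<and> dkey y < dkey (drev n d) \<and>
    (\<forall>z\<in>rot n T v. dkey z < dkey (drev n d) \<longrightarrow> dkey z \<le> dkey y)"
  then have "dkey y = dkey x" using assms(2-4) by force
  then show "y = x" using key_inj h assms(2) by blast
qed


lemma keyK1: "0 < e \<Longrightarrow> dkey (Out v e) < 0" by simp


lemma bmod_cancel: "a < n \<Longrightarrow> bmod n (int (bmod n (int a + e)) - e) = a"
  using npos unfolding bmod_def by (simp add: mod_diff_left_eq)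

lemma nxt_fwd_a:
  assumes "Out a e \<in> darts n T" "1 \<le> e" "v = bmod n (int a + e)"
    "Ch (bmod n (int v - int k0)) k0 \<in> T" "int k0 > e"
    "\<And>k. Ch (bmod n (int v - int k)) k \<in> T \<Longrightarrow> int k > e \<Longrightarrow> k0 \<le> k"
  shows "nxt n T (Out a e) = Out v (- int k0)"
proof (rule nxt_V)
  show "dhead n (Out a e) = V v" using assms(3) by simp
  have v: "v < n" using assms(3) bmod_lt npos by simp
  have k0: "2 \<le> k0" using chT[OF assms(4)] by simp
  have kp: "0 < 1 / real k0" using k0 by simp
  have hk: "dkey (Out v (- int k0)) = 1 / real k0" by simp
  have dr: "drev n (Out a e) = Out v (-e)" using assms(3) by simp
  show "Out v (- int k0) \<in> rot n T v"
    unfolding rot_iff darts_Out using v k0 assms(4) by simp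
  show "dkey (Out v (- int k0)) < dkey (drev n (Out a e))"
  proof -
    have "real_of_int e < real k0" using assms(5) by linarith
    moreover have "0 < real_of_int e" using assms(2) by simp
    ultimately show ?thesis unfolding dr by (simp add: divide_simps)
  qed
  fix y assume y: "y \<in> rot n T v" "dkey y < dkey (drev n (Out a e))"
  from y(1) show "dkey y \<le> dkey (Out v (- int k0))"
  proof (cases rule: rot_cases)
    case (1 e')
    from 1(2) have "e' = 1 \<or> (e' \<ge> 2 \<and> Ch v (nat e') \<in> T) \<or> (e' \<le> -2 \<and> Ch (bmod n (int v + e')) (nat (-e')) \<in> T)"
      unfolding darts_Out by simp
    then show ?thesis
    proof (elim disjE conjE)
      assume "e' \<le> -2" "Ch (bmod n (int v + e')) (nat (-e')) \<in> T"
      moreover have "e' < - e" using y(2) 1(1) \<open>e' \<le> -2\<close> assms(2) unfolding dr using inv_lt[of "-e'" e] by simp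
      ultimately have "k0 \<le> nat (-e')" using assms(6)[of "nat (-e')"] by simp
      then have "int k0 \<le> -e'" using \<open>e' \<le> -2\<close> by (simp add: le_nat_iff)
      then show ?thesis using 1(1) \<open>e' \<le> -2\<close> k0 inv_le[of "-e'" "int k0"] by simp
    next
      assume "e' = 1" then have "dkey y = -1" using 1(1) by simp
      then show ?thesis using kp hk by linarith
    next
      assume "2 \<le> e'" then have "dkey y < 0" using 1(1) keyK1[of e' v] by simp
      then show ?thesis using kp hk by linarith
    qed
  next
    case 2
    have "dkey y = 1" using 2 by simp
    moreover have "dkey (drev n (Out a e)) = 1 / real_of_int e" unfolding dr by simp
    moreover have "1 / real_of_int e \<le> 1" using assms(2) by simp
    ultimately have False using y(2) by linarith
    then show ?thesis ..
  next
    case 3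
    then show ?thesis using kp hk by (simp only: dkey.simps)
  qed
qed


lemma nxt_fwd_b:
  assumes "Out a e \<in> darts n T" "1 \<le> e" "v = bmod n (int a + e)"
    "\<And>k. Ch (bmod n (int v - int k)) k \<in> T \<Longrightarrow> \<not> int k > e" "Sp v \<in> T"
  shows "nxt n T (Out a e) = Up v"
proof (rule nxt_V)
  show "dhead n (Out a e) = V v" using assms(3) by simp
  have dr: "drev n (Out a e) = Out v (-e)" using assms(3) by simp
  have kd: "dkey (drev n (Out a e)) = 1 / real_of_int e" unfolding dr by simp
  have kp: "0 < 1 / real_of_int e" using assms(2) by simp
  show "Up v \<in> rot n T v" unfolding rot_iff darts_Up using assms(5) by simp
  show "dkey (Up v) < dkey (drev n (Out a e))" using kd kp by simp
  fix y assume y: "y \<in> rot n T v" "dkey y < dkey (drev n (Out a e))"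
  from y(1) show "dkey y \<le> dkey (Up v)"
  proof (cases rule: rot_cases)
    case (1 e')
    from 1(2) have "e' = 1 \<or> (e' \<ge> 2 \<and> Ch v (nat e') \<in> T) \<or> (e' \<le> -2 \<and> Ch (bmod n (int v + e')) (nat (-e')) \<in> T)"
      unfolding darts_Out by simp
    then show ?thesis
    proof (elim disjE conjE)
      assume h: "e' \<le> -2" "Ch (bmod n (int v + e')) (nat (-e')) \<in> T"
      have "dkey y = 1 / real_of_int (-e')" using 1(1) by simp
      then have "1 / real_of_int (-e') < 1 / real_of_int e" using y(2) kd by simp
      then have "e < -e'" using inv_lt[of "-e'" e] h(1) assms(2) by simp
      moreover have "Ch (bmod n (int v - int (nat (-e')))) (nat (-e')) \<in> T" using h by simp
      ultimately have False using assms(4)[of "nat (-e')"] h(1) by simp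
      then show ?thesis ..
    next
      assume "e' = 1" then show ?thesis using 1(1) by simp
    next
      assume "2 \<le> e'" then show ?thesis using 1(1) by simp
    qed
  next
    case 2
    have "dkey y = 1" using 2 by simp
    moreover have "1 / real_of_int e \<le> 1" using assms(2) by simp
    ultimately have False using y(2) kd by linarith
    then show ?thesis ..
  next
    case 3
    then show ?thesis by simp
  qed
qed

lemma nxt_fwd_c:
  assumes "Out a e \<in> darts n T" "1 \<le> e" "v = bmod n (int a + e)"
    "\<And>k. Ch (bmod n (int v - int k)) k \<in> T \<Longrightarrow> \<not> int k > e" "Sp v \<notin> T"
    "kk = 1 \<or> Ch v kk \<in> T" "\<And>k. Ch v k \<in> T \<Longrightarrow> k \<le> kk"
  shows "nxt n T (Out a e) = Out v (int kk)"
proof (rule nxt_V)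
  show "dhead n (Out a e) = V v" using assms(3) by simp
  have v: "v < n" using assms(3) bmod_lt npos by simp
  have kk: "1 \<le> kk" using assms(6) chT by force
  have dr: "drev n (Out a e) = Out v (-e)" using assms(3) by simp
  have kd: "dkey (drev n (Out a e)) = 1 / real_of_int e" unfolding dr by simp
  have kp: "0 < 1 / real_of_int e" using assms(2) by simp
  have kx: "dkey (Out v (int kk)) = - (1 / real kk)" by simp
  have kxn: "0 < 1 / real kk" using kk by simp
  show "Out v (int kk) \<in> rot n T v" unfolding rot_iff darts_Out using assms(6) v chT by auto
  show "dkey (Out v (int kk)) < dkey (drev n (Out a e))" using kd kp kx kxn by linarith
  fix y assume y: "y \<in> rot n T v" "dkey y < dkey (drev n (Out a e))"
  from y(1) show "dkey y \<le> dkey (Out v (int kk))"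
  proof (cases rule: rot_cases)
    case (1 e')
    from 1(2) have "e' = 1 \<or> (e' \<ge> 2 \<and> Ch v (nat e') \<in> T) \<or> (e' \<le> -2 \<and> Ch (bmod n (int v + e')) (nat (-e')) \<in> T)"
      unfolding darts_Out by simp
    then show ?thesis
    proof (elim disjE conjE)
      assume h: "e' \<le> -2" "Ch (bmod n (int v + e')) (nat (-e')) \<in> T"
      have "dkey y = 1 / real_of_int (-e')" using 1(1) by simp
      then have "1 / real_of_int (-e') < 1 / real_of_int e" using y(2) kd by simp
      then have "e < -e'" using inv_lt[of "-e'" e] h(1) assms(2) by simp
      moreover have "Ch (bmod n (int v - int (nat (-e')))) (nat (-e')) \<in> T" using h by simp
      ultimately have False using assms(4)[of "nat (-e')"] h(1) by simp
      then show ?thesis ..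
    next
      assume "e' = 1"
      moreover have "1 / real kk \<le> 1" using kk by simp
      ultimately show ?thesis using 1(1) kx by simp
    next
      assume h: "2 \<le> e'" "Ch v (nat e') \<in> T"
      then have "nat e' \<le> kk" using assms(7) by blast
      then have "e' \<le> int kk" "0 < int kk" using h kk by auto
      then have "1 / real_of_int (int kk) \<le> 1 / real_of_int e'" using inv_le[of "int kk" e'] h by simp
      then show ?thesis using 1(1) kx by simp
    qed
  next
    case 2
    have "dkey y = 1" using 2 by simp
    moreover have "1 / real_of_int e \<le> 1" using assms(2) by simp
    ultimately have False using y(2) kd by linarith
    then show ?thesis ..
  next
    case 3
    then show ?thesis using assms(5) by simp
  qed
qed

lemma nxt_cl:
  assumes "Ch p k \<in> T" "q = bmod n (int p + int k)" "kk = 1 \<or> Ch p kk \<in> T" "kk < k"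
    "\<And>j. Ch p j \<in> T \<Longrightarrow> j < k \<Longrightarrow> j \<le> kk"
  shows "nxt n T (Out q (- int k)) = Out p (int kk)"
proof (rule nxt_V)
  have p: "p < n" using chT assms(1) by auto
  have bp: "bmod n (int q + - int k) = p" using bmod_cancel[OF p, of "int k"] assms(2) by simp
  show "dhead n (Out q (- int k)) = V p" using bp by simp
  have kk: "1 \<le> kk" using assms(3) chT by force
  have dr: "drev n (Out q (- int k)) = Out p (int k)" using bp by simp
  have kd: "dkey (drev n (Out q (- int k))) = - (1 / real k)" unfolding dr by simp
  have kx: "dkey (Out p (int kk)) = - (1 / real kk)" by simp
  have lt: "1 / real k < 1 / real kk" using inv_lt[of "int k" "int kk"] kk assms(4) by simp
  show "Out p (int kk) \<in> rot n T p" unfolding rot_iff darts_Out using assms(3) p chT by auto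
  show "dkey (Out p (int kk)) < dkey (drev n (Out q (- int k)))" using kd kx lt by linarith
  fix y assume y: "y \<in> rot n T p" "dkey y < dkey (drev n (Out q (- int k)))"
  have kn: "0 < 1 / real k" using assms(4) by simp
  from y(1) show "dkey y \<le> dkey (Out p (int kk))"
  proof (cases rule: rot_cases)
    case (1 e')
    from 1(2) have "e' = 1 \<or> (e' \<ge> 2 \<and> Ch p (nat e') \<in> T) \<or> (e' \<le> -2 \<and> Ch (bmod n (int p + e')) (nat (-e')) \<in> T)"
      unfolding darts_Out by simp
    then show ?thesis
    proof (elim disjE conjE)
      assume h: "e' \<le> -2"
      have "dkey y = 1 / real_of_int (-e')" using 1(1) by simp
      moreover have "0 < 1 / real_of_int (-e')" using h by simp
      ultimately have False using y(2) kd kn by linarith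
      then show ?thesis ..
    next
      assume "e' = 1"
      moreover have "1 / real kk \<le> 1" using kk by simp
      ultimately show ?thesis using 1(1) kx by simp
    next
      assume h: "2 \<le> e'" "Ch p (nat e') \<in> T"
      have "dkey y = - (1 / real_of_int e')" using 1(1) by simp
      then have "1 / real_of_int (int k) < 1 / real_of_int e'" using y(2) kd by simp
      then have "e' < int k" using inv_lt[of "int k" e'] h assms(4) by simp
      then have "nat e' < k" using h by linarith
      then have "nat e' \<le> kk" using assms(5)[OF h(2)] by simp
      then have "e' \<le> int kk" "0 < int kk" using h kk by auto
      then have "1 / real_of_int (int kk) \<le> 1 / real_of_int e'" using inv_le[of "int kk" e'] h by simp
      then show ?thesis using 1(1) kx by simp
    qed
  next
    case 2
    have "dkey y = 1" using 2 by simp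
    then have False using y(2) kd kn by linarith
    then show ?thesis ..
  next
    case 3
    then have False using y(2) kd kn by simp
    then show ?thesis ..
  qed
qed

lemma nxt_down:
  assumes "Sp j \<in> T" "kk = 1 \<or> Ch j kk \<in> T" "\<And>k. Ch j k \<in> T \<Longrightarrow> k \<le> kk"
  shows "nxt n T (Down j) = Out j (int kk)"
proof (rule nxt_V)
  have p: "j < n" using spT' assms(1) by auto
  show "dhead n (Down j) = V j" by simp
  have kk: "1 \<le> kk" using assms(2) chT by force
  have kd: "dkey (drev n (Down j)) = 0" by simp
  have kx: "dkey (Out j (int kk)) = - (1 / real kk)" by simp
  have kxn: "0 < 1 / real kk" using kk by simp
  show "Out j (int kk) \<in> rot n T j" unfolding rot_iff darts_Out using assms(2) p chT by auto
  show "dkey (Out j (int kk)) < dkey (drev n (Down j))" using kd kx kxn by linarith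
  fix y assume y: "y \<in> rot n T j" "dkey y < dkey (drev n (Down j))"
  from y(1) show "dkey y \<le> dkey (Out j (int kk))"
  proof (cases rule: rot_cases)
    case (1 e')
    from 1(2) have "e' = 1 \<or> (e' \<ge> 2 \<and> Ch j (nat e') \<in> T) \<or> (e' \<le> -2 \<and> Ch (bmod n (int j + e')) (nat (-e')) \<in> T)"
      unfolding darts_Out by simp
    then show ?thesis
    proof (elim disjE conjE)
      assume h: "e' \<le> -2"
      have "dkey y = 1 / real_of_int (-e')" using 1(1) by simp
      moreover have "0 < 1 / real_of_int (-e')" using h by simp
      ultimately have False using y(2) kd by linarith
      then show ?thesis ..
    next
      assume "e' = 1"
      moreover have "1 / real kk \<le> 1" using kk by simp
      ultimately show ?thesis using 1(1) kx by simp
    next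
      assume h: "2 \<le> e'" "Ch j (nat e') \<in> T"
      then have "nat e' \<le> kk" using assms(3) by blast
      then have "e' \<le> int kk" "0 < int kk" using h kk by auto
      then have "1 / real_of_int (int kk) \<le> 1 / real_of_int e'" using inv_le[of "int kk" e'] h by simp
      then show ?thesis using 1(1) kx by simp
    qed
  next
    case 2
    have "dkey y = 1" using 2 by simp
    then have False using y(2) kd by linarith
    then show ?thesis ..
  next
    case 3
    then have False using y(2) kd by simp
    then show ?thesis ..
  qed
qed

lemma nxt_up: "nxt n T (Up i) = Down (if (\<exists>j. Sp j \<in> T \<and> j < i) then Max {j. Sp j \<in> T \<and> j < i}
                                 else Max {j. Sp j \<in> T})"
  by (simp add: nxt_def)




definition Lsp :: "int \<Rightarrow> nat" where
  "Lsp x = (LEAST r. Sp (bmod n (x + int r)) \<in> T)"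
definition nsp :: "int \<Rightarrow> nat" where
  "nsp x = bmod n (x + int (Lsp x))"
definition Enc :: "nat \<Rightarrow> int \<Rightarrow> (nat \<times> nat) set" where
  "Enc a e = {(i,k). Ch i k \<in> T \<and> (int a - int i) mod int n + e \<le> int k \<and> \<not> (i = a \<and> int k = e)}"
definition ownS :: "(nat \<times> nat) set \<Rightarrow> nat \<times> nat" where
  "ownS S = (SOME p. p \<in> S \<and> (\<forall>q\<in>S. snd p \<le> snd q))"

primrec lbl :: "dart \<Rightarrow> arc" where
  "lbl (Out a e) = (if 1 \<le> e then (if Enc a e \<noteq> {} then Ch (fst (ownS (Enc a e))) (snd (ownS (Enc a e)))
       else Sp (nsp (int a + e))) else Ch (bmod n (int a + e)) (nat (-e)))"
| "lbl (Up j) = Sp j"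
| "lbl (Down j) = Sp (nsp (int j + 1))"

lemma Lsp_ex: "\<exists>r. Sp (bmod n (x + int r)) \<in> T"
proof -
  obtain j where j: "Sp j \<in> T" using spT by blast
  have "bmod n (x + int (nat ((int j - x) mod int n))) = j"
    using spT'[OF j] npos unfolding bmod_def by (simp add: mod_add_right_eq)
  then show ?thesis using j by metis
qed

lemma nsp_in: "Sp (nsp x) \<in> T"
  unfolding nsp_def Lsp_def using LeastI_ex[OF Lsp_ex] by simp

lemma Lsp0: "Sp (bmod n x) \<in> T \<Longrightarrow> Lsp x = 0"
  unfolding Lsp_def by (rule Least_eq_0) simp

lemma nsp0: "Sp (bmod n x) \<in> T \<Longrightarrow> nsp x = bmod n x"
  unfolding nsp_def using Lsp0 by simp

lemma Lsp_skip: "(\<And>r. r < K \<Longrightarrow> Sp (bmod n (x + int r)) \<notin> T) \<Longrightarrow> Lsp x = K + Lsp (x + int K)"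
proof (induction K arbitrary: x)
  case 0 then show ?case by simp
next
  case (Suc K)
  have n0: "Sp (bmod n x) \<notin> T" using Suc.prems[of 0] by simp
  obtain r where r: "Sp (bmod n (x + int r)) \<in> T" using Lsp_ex by blast
  have "Lsp x = Suc (LEAST m. Sp (bmod n (x + int (Suc m))) \<in> T)"
    unfolding Lsp_def by (rule Least_Suc[of "\<lambda>r. Sp (bmod n (x + int r)) \<in> T", OF r]) (use n0 in simp)
  also have "(LEAST m. Sp (bmod n (x + int (Suc m))) \<in> T) = Lsp (x + 1)"
    unfolding Lsp_def by (simp add: ac_simps)
  also have "Lsp (x + 1) = K + Lsp (x + 1 + int K)"
  proof (rule Suc.IH)
    fix r assume "r < K"
    then have "Sp (bmod n (x + int (Suc r))) \<notin> T" using Suc.prems[of "Suc r"] by simp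
    then show "Sp (bmod n (x + 1 + int r)) \<notin> T" by (simp add: ac_simps)
  qed
  finally show ?case by (simp add: algebra_simps)
qed

lemma nsp_skip: "(\<And>r. r < K \<Longrightarrow> Sp (bmod n (x + int r)) \<notin> T) \<Longrightarrow> nsp x = nsp (x + int K)"
  unfolding nsp_def using Lsp_skip[of K x] by (simp add: add.assoc)

lemma Lsp_cong: "x mod int n = y mod int n \<Longrightarrow> Lsp x = Lsp y"
proof -
  assume h: "x mod int n = y mod int n"
  have "\<And>r. bmod n (x + int r) = bmod n (y + int r)"
    unfolding bmod_def using h by (metis mod_add_left_eq)
  then show ?thesis unfolding Lsp_def by simp
qed

lemma nsp_cong: "x mod int n = y mod int n \<Longrightarrow> nsp x = nsp y"
proof -
  assume h: "x mod int n = y mod int n"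
  then have "Lsp x = Lsp y" by (rule Lsp_cong)
  moreover have "bmod n (x + int (Lsp y)) = bmod n (y + int (Lsp y))"
    unfolding bmod_def using h by (metis mod_add_left_eq)
  ultimately show ?thesis unfolding nsp_def by simp
qed

lemma Lsp_lt: "Lsp x < n"
proof -
  obtain j where j: "Sp j \<in> T" using spT by blast
  have "bmod n (x + int (nat ((int j - x) mod int n))) = j"
    using spT'[OF j] npos unfolding bmod_def by (simp add: mod_add_right_eq)
  then have "Lsp x \<le> nat ((int j - x) mod int n)" unfolding Lsp_def using j by (metis Least_le)
  also have "\<dots> < n" using npos by (simp add: nat_less_iff)
  finally show ?thesis .
qed

lemma Enc_fin: "finite (Enc a e)"
proof -
  have "Enc a e \<subseteq> {..<n} \<times> {..n}" unfolding Enc_def using chT by auto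
  then show ?thesis by (rule finite_subset) simp
qed

lemma Enc_mem: "(i,k) \<in> Enc a e \<longleftrightarrow> Ch i k \<in> T \<and> (int a - int i) mod int n + e \<le> int k \<and> \<not> (i = a \<and> int k = e)"
  unfolding Enc_def by simp

lemma mod_back: "i < n \<Longrightarrow> (x - (x - int i) mod int n) mod int n = int i"
  by (simp add: mod_diff_right_eq)

lemma enc_uniq:
  assumes "1 \<le> e" "(i,k) \<in> Enc a e" "(j,k) \<in> Enc a e"
  shows "i = j"
proof (rule ccontr)
  assume ne: "i \<noteq> j"
  define r1 where "r1 = (int a - int i) mod int n"
  define r2 where "r2 = (int a - int j) mod int n"
  have ci: "Ch i k \<in> T" "r1 + e \<le> int k" using assms(2) unfolding Enc_mem r1_def by auto
  have cj: "Ch j k \<in> T" "r2 + e \<le> int k" using assms(3) unfolding Enc_mem r2_def by auto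
  have i: "i < n" and j: "j < n" using chT ci cj by auto
  have m1: "(int a - r1) mod int n = int i" unfolding r1_def using mod_back[OF i] .
  have m2: "(int a - r2) mod int n = int j" unfolding r2_def using mod_back[OF j] .
  have p1: "0 \<le> r1" and p2: "0 \<le> r2" unfolding r1_def r2_def using npos by auto
  have "r1 \<noteq> r2" using m1 m2 ne by auto
  then consider "r1 < r2" | "r2 < r1" by linarith
  then show False
  proof cases
    case 1
    show False
      by (rule crossCC[OF cj(1) ci(1) _ m2 m1]) (use ne 1 ci cj assms(1) p1 p2 in auto)
  next
    case 2
    show False
      by (rule crossCC[OF ci(1) cj(1) _ m1 m2]) (use ne 2 ci cj assms(1) p1 p2 in auto)
  qed
qed

lemma ownS_spec:
  assumes "S \<noteq> {}" "finite S"
  shows "ownS S \<in> S \<and> (\<forall>q\<in>S. snd (ownS S) \<le> snd q)"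
proof -
  have "Min (snd ` S) \<in> snd ` S" using assms by simp
  then obtain p where p: "p \<in> S" "snd p = Min (snd ` S)" by auto
  have "\<forall>q\<in>S. snd p \<le> snd q" using p assms by simp
  then have "\<exists>p. p \<in> S \<and> (\<forall>q\<in>S. snd p \<le> snd q)" using p by blast
  then show ?thesis unfolding ownS_def by (rule someI_ex)
qed

lemma own_eq:
  assumes "1 \<le> e" "p \<in> Enc a e" "\<And>q. q \<in> Enc a e \<Longrightarrow> snd p \<le> snd q"
  shows "ownS (Enc a e) = p"
proof -
  have s: "ownS (Enc a e) \<in> Enc a e \<and> (\<forall>q\<in>Enc a e. snd (ownS (Enc a e)) \<le> snd q)"
    using ownS_spec[OF _ Enc_fin] assms(2) by blast
  then have "snd (ownS (Enc a e)) = snd p" using assms(2,3) by (meson antisym)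
  then show ?thesis using enc_uniq[OF assms(1)] s assms(2)
    by (metis prod.collapse)
qed




lemma lbl_fwd_a:
  assumes d: "Out a e \<in> darts n T" and e: "1 \<le> e" and v: "v = bmod n (int a + e)"
    and k0: "Ch (bmod n (int v - int k0)) k0 \<in> T" "int k0 > e"
    and mn: "\<And>k. Ch (bmod n (int v - int k)) k \<in> T \<Longrightarrow> int k > e \<Longrightarrow> k0 \<le> k"
  shows "lbl (Out a e) = Ch (bmod n (int v - int k0)) k0"
proof -
  define i0 where "i0 = bmod n (int v - int k0)"
  have a: "a < n" using d by (simp add: darts_Out)
  have iv: "int v = (int a + e) mod int n" using v int_bmod npos by simp
  have ii0: "int i0 = (int a + e - int k0) mod int n"
    unfolding i0_def using int_bmod[OF npos] iv by (simp add: mod_diff_left_eq)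
  have k0n: "k0 \<le> n" using chT k0(1) by auto
  have r0: "(int a - int i0) mod int n = int k0 - e"
  proof -
    have "(int a - int i0) mod int n = (int a - (int a + e - int k0)) mod int n"
      unfolding ii0 by (simp add: mod_diff_right_eq)
    also have "\<dots> = (int k0 - e) mod int n" by simp
    also have "\<dots> = int k0 - e" using k0n k0(2) e by (simp add: mod_pos_pos_trivial)
    finally show ?thesis .
  qed
  have p0: "(i0, k0) \<in> Enc a e" unfolding Enc_mem using r0 k0 i0_def by simp
  have minl: "k0 \<le> l" if q: "(j, l) \<in> Enc a e" for j l
  proof (rule ccontr)
    assume "\<not> k0 \<le> l"
    then have lk: "l < k0" by simp
    define r where "r = (int a - int j) mod int n"
    have cj: "Ch j l \<in> T" "r + e \<le> int l" "\<not> (j = a \<and> int l = e)" using q unfolding Enc_mem r_def by auto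
    have j: "j < n" using chT cj by auto
    have r_nn: "0 \<le> r" unfolding r_def using npos by simp
    have cm: "(int a - r) mod int n = int j" unfolding r_def using mod_back[OF j] .
    consider "r + e = int l" | "r + e < int l" using cj(2) by linarith
    then show False
    proof cases
      case 1
      have "r \<noteq> 0"
      proof
        assume "r = 0"
        then have "int j = int a mod int n" using cm by simp
        then have "j = a" using a by simp
        then show False using cj(3) 1 \<open>r = 0\<close> by simp
      qed
      then have le: "int l > e" using 1 r_nn by simp
      have "bmod n (int v - int l) = j"
      proof -
        have "int (bmod n (int v - int l)) = (int v - int l) mod int n" using int_bmod npos by simp
        also have "\<dots> = (int a + e - int l) mod int n" unfolding iv by (simp add: mod_diff_left_eq)
        also have "\<dots> = (int a - r) mod int n"
        proof -
          have "int a + e - int l = int a - r" using 1 by linarith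
          then show ?thesis by (rule arg_cong[where f="\<lambda>z. z mod int n"])
        qed
        finally show ?thesis using cm by simp
      qed
      then have "k0 \<le> l" using mn[of l] cj(1) le by simp
      then show False using lk by simp
    next
      case 2
      have x1: "(int a + e - int k0) mod int n = int i0" using ii0 by simp
      show False
        by (rule crossCC[OF k0(1)[folded i0_def] cj(1) _ x1 cm]) (use lk 2 r_nn e in auto)
    qed
  qed
  have "ownS (Enc a e) = (i0, k0)"
    by (rule own_eq[OF e p0]) (use minl in auto)
  then show ?thesis using e p0 i0_def by auto
qed


lemma enc_lift:
  assumes "(j,l) \<in> Enc a e" "a < n"
  obtains c where "c mod int n = int j" "c \<le> int a" "int a - int n < c" "int a + e \<le> c + int l"
    "Ch j l \<in> T" "c = int a \<Longrightarrow> j = a \<and> int l \<noteq> e"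
proof -
  define c where "c = int a - (int a - int j) mod int n"
  have cj: "Ch j l \<in> T" "(int a - int j) mod int n + e \<le> int l" "\<not> (j = a \<and> int l = e)"
    using assms(1) unfolding Enc_mem by auto
  have j: "j < n" using chT cj by auto
  have "c mod int n = int j" unfolding c_def using mod_back[OF j] .
  moreover have "c \<le> int a" "int a - int n < c" unfolding c_def using npos by auto
  moreover have "int a + e \<le> c + int l" unfolding c_def using cj by simp
  moreover have "j = a \<and> int l \<noteq> e" if "c = int a"
  proof -
    have "int j = int a mod int n" using \<open>c mod int n = int j\<close> that by simp
    then have "j = a" using assms(2) by simp
    then show ?thesis using cj(3) by simp
  qed
  ultimately show ?thesis using that cj(1) by blast
qed

lemma enc_end:
  assumes "(j,l) \<in> Enc a e" "a < n" "1 \<le> e" "v = bmod n (int a + e)"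
    "c mod int n = int j" "c \<le> int a" "c = int a \<Longrightarrow> j = a \<and> int l \<noteq> e" "c + int l = int a + e"
  shows "int l > e" "bmod n (int v - int l) = j"
proof -
  have "c \<noteq> int a" using assms(7,8) by auto
  then show "int l > e" using assms(6,8) by simp
  have "int (bmod n (int v - int l)) = (int v - int l) mod int n" using int_bmod npos by simp
  also have "\<dots> = (int a + e - int l) mod int n" using assms(4) int_bmod[OF npos] by (simp add: mod_diff_left_eq)
  also have "int a + e - int l = c" using assms(8) by simp
  finally show "bmod n (int v - int l) = j" using assms(5) by simp
qed

lemma lbl_fwd_b:
  assumes d: "Out a e \<in> darts n T" and e: "1 \<le> e" and v: "v = bmod n (int a + e)"
    and nce: "\<And>k. Ch (bmod n (int v - int k)) k \<in> T \<Longrightarrow> \<not> int k > e" and sv: "Sp v \<in> T"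
  shows "lbl (Out a e) = Sp v"
proof -
  have a: "a < n" using d by (simp add: darts_Out)
  have iv: "int v = (int a + e) mod int n" using v int_bmod npos by simp
  have E: "Enc a e = {}"
  proof (rule ccontr)
    assume "Enc a e \<noteq> {}"
    then obtain j l where q: "(j,l) \<in> Enc a e" by auto
    obtain c where c: "c mod int n = int j" "c \<le> int a" "int a - int n < c" "int a + e \<le> c + int l"
      "Ch j l \<in> T" "c = int a \<Longrightarrow> j = a \<and> int l \<noteq> e" using enc_lift[OF q a] by blast
    consider "c + int l = int a + e" | "int a + e < c + int l" using c(4) by linarith
    then show False
    proof cases
      case 1
      have "int l > e" "bmod n (int v - int l) = j" using enc_end[OF q a e v c(1,2,6) 1] by auto
      then show False using nce[of l] c(5) by simp
    next
      case 2
      show False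
        by (rule crossCS[OF c(5) sv c(1), of "int a + e"]) (use iv 2 c(2) e in auto)
    qed
  qed
  have "nsp (int a + e) = v" using nsp0[of "int a + e"] sv v by simp
  then show ?thesis using E e by simp
qed


lemma nospoke_in:
  assumes "kk = 1 \<or> Ch v kk \<in> T" "v < n" "Sp v \<notin> T" "r < kk"
  shows "Sp (bmod n (int v + int r)) \<notin> T"
proof
  assume sp: "Sp (bmod n (int v + int r)) \<in> T"
  show False
  proof (cases "r = 0")
    case True then show False using sp assms(2,3) unfolding bmod_def by simp
  next
    case False
    then have "Ch v kk \<in> T" using assms(1,4) by auto
    show False
      by (rule crossCS[OF \<open>Ch v kk \<in> T\<close> sp _ _, of "int v" "int v + int r"])
         (use assms(2,4) False int_bmod[OF npos] in auto)
  qed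
qed

lemma enc_fwd_c:
  assumes d: "Out a e \<in> darts n T" and e: "1 \<le> e" and v: "v = bmod n (int a + e)"
    and nce: "\<And>k. Ch (bmod n (int v - int k)) k \<in> T \<Longrightarrow> \<not> int k > e" and sv: "Sp v \<notin> T"
    and kk: "kk = 1 \<or> Ch v kk \<in> T" and mx: "\<And>k. Ch v k \<in> T \<Longrightarrow> k \<le> kk"
  shows "Enc v (int kk) = Enc a e"
proof -
  have a: "a < n" using d by (simp add: darts_Out)
  have vn: "v < n" using v bmod_lt npos by simp
  have kk1: "1 \<le> kk" using kk chT by force
  have kkn: "kk \<le> n" using kk chT npos by force
  have iv: "int v = (int a + e) mod int n" using v int_bmod npos by simp
  have sub1: "(j,l) \<in> Enc v (int kk)" if q: "(j,l) \<in> Enc a e" for j l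
  proof -
    obtain c where c: "c mod int n = int j" "c \<le> int a" "int a - int n < c" "int a + e \<le> c + int l"
      "Ch j l \<in> T" "c = int a \<Longrightarrow> j = a \<and> int l \<noteq> e" using enc_lift[OF q a] by blast
    have ln: "l \<le> n" using chT c(5) by auto
    have lt: "int a + e < c + int l"
    proof (rule ccontr)
      assume "\<not> int a + e < c + int l"
      then have eq: "c + int l = int a + e" using c(4) by linarith
      have "int l > e" "bmod n (int v - int l) = j" using enc_end[OF q a e v c(1,2,6) eq] by auto
      then show False using nce[of l] c(5) by simp
    qed
    have vj: "(int v - int j) mod int n = int a + e - c"
    proof -
      have "(int v - int j) mod int n = (int a + e - c) mod int n"
        unfolding iv c(1)[symmetric] by (simp add: mod_diff_eq)
      also have "\<dots> = int a + e - c" using lt ln c(2) e by (intro mod_pos_pos_trivial) auto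
      finally show ?thesis .
    qed
    have jv: "j \<noteq> v"
    proof
      assume "j = v"
      then have "(int v - int j) mod int n = 0" by simp
      then show False using vj c(2) e by simp
    qed
    have "int a + e - c + int kk \<le> int l"
    proof (rule ccontr)
      assume h: "\<not> int a + e - c + int kk \<le> int l"
      show False
      proof (cases "kk = 1")
        case True then show False using h lt by simp
      next
        case False
        then have ck: "Ch v kk \<in> T" using kk by auto
        have xm: "(int a + e) mod int n = int v" using iv by simp
        show False
          by (rule crossCC[OF c(5) ck _ c(1) xm]) (use jv h lt c(2) e in auto)
      qed
    qed
    then show ?thesis unfolding Enc_mem using vj jv c(5) by simp
  qed
  have sub2: "(j,l) \<in> Enc a e" if q: "(j,l) \<in> Enc v (int kk)" for j l
  proof -
    obtain c' where c: "c' mod int n = int j" "c' \<le> int v" "int v - int n < c'" "int v + int kk \<le> c' + int l"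
      "Ch j l \<in> T" "c' = int v \<Longrightarrow> j = v \<and> l \<noteq> kk" using enc_lift[OF q vn] by blast
    have ln: "l \<le> n" using chT c(5) by auto
    have cv: "c' < int v"
    proof (rule ccontr)
      assume "\<not> c' < int v"
      then have "c' = int v" using c(2) by simp
      then have "j = v" "l \<noteq> kk" using c(6) by auto
      moreover have "l \<le> kk" using mx c(5) \<open>j = v\<close> by simp
      moreover have "int kk \<le> int l" using c(4) \<open>c' = int v\<close> by simp
      ultimately show False by simp
    qed
    define c where "c = c' + (int a + e - int v)"
    have sh: "(int a + e - int v) mod int n = 0" unfolding iv by (simp add: mod_diff_right_eq)
    have cm: "c mod int n = int j" unfolding c_def using c(1) sh chT[OF c(5)] by (simp add: mod_add_eq[symmetric])
    have c1: "c < int a + e" "int a + e < c + int l" unfolding c_def using cv c(4) kk1 by auto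
    have ca: "c \<le> int a"
    proof (rule ccontr)
      assume h: "\<not> c \<le> int a"
      show False
      proof (cases "e = 1")
        case True then show False using h c1 by simp
      next
        case False
        then have ce: "Ch a (nat e) \<in> T" using d e by (auto simp: darts_Out)
        have en: "nat e \<le> n" using chT ce by auto
        have am: "int a mod int n = int a" using a by simp
        have ja: "j \<noteq> a"
        proof
          assume "j = a"
          then have "(c - int a) mod int n = 0" using cm am by (simp add: mod_diff_eq[symmetric])
          moreover have "0 < c - int a" "c - int a < int n" using h c1 en e by auto
          ultimately show False by simp
        qed
        show False
          by (rule crossCC[OF ce c(5) _ am cm]) (use ja h c1 e in auto)
      qed
    qed
    have aj: "(int a - int j) mod int n = int a - c"
    proof -
      have "(int a - int j) mod int n = (int a - c) mod int n"
        unfolding cm[symmetric] by (simp add: mod_diff_right_eq)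
      also have "\<dots> = int a - c" using ca c1 ln e by (intro mod_pos_pos_trivial) auto
      finally show ?thesis .
    qed
    show ?thesis unfolding Enc_mem using aj c1 ca c(5) by auto
  qed
  show ?thesis using sub1 sub2 by auto
qed

lemma lbl_fwd_c:
  assumes d: "Out a e \<in> darts n T" and e: "1 \<le> e" and v: "v = bmod n (int a + e)"
    and nce: "\<And>k. Ch (bmod n (int v - int k)) k \<in> T \<Longrightarrow> \<not> int k > e" and sv: "Sp v \<notin> T"
    and kk: "kk = 1 \<or> Ch v kk \<in> T" and mx: "\<And>k. Ch v k \<in> T \<Longrightarrow> k \<le> kk"
  shows "lbl (Out v (int kk)) = lbl (Out a e)"
proof -
  have vn: "v < n" using v bmod_lt npos by simp
  have kk1: "1 \<le> kk" using kk chT by force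
  have iv: "int v = (int a + e) mod int n" using v int_bmod npos by simp
  have EE: "Enc v (int kk) = Enc a e" by (rule enc_fwd_c[OF d e v nce sv kk mx])
  show ?thesis
  proof (cases "Enc a e = {}")
    case False then show ?thesis using EE e kk1 by simp
  next
    case True
    have "nsp (int a + e) = nsp (int v)" by (rule nsp_cong) (simp add: iv)
    also have "\<dots> = nsp (int v + int kk)"
      by (rule nsp_skip) (rule nospoke_in[OF kk vn sv])
    finally show ?thesis using True EE e kk1 by simp
  qed
qed


lemma lbl_cl:
  assumes pk: "Ch p k \<in> T" and kk: "kk = 1 \<or> Ch p kk \<in> T" and kl: "kk < k"
    and mx: "\<And>j. Ch p j \<in> T \<Longrightarrow> j < k \<Longrightarrow> j \<le> kk"
  shows "lbl (Out p (int kk)) = Ch p k"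
proof -
  have p: "p < n" using chT pk by auto
  have kk1: "1 \<le> kk" using kk chT by force
  have p0: "(p, k) \<in> Enc p (int kk)" unfolding Enc_mem using pk kl by simp
  have minl: "k \<le> l" if q: "(j, l) \<in> Enc p (int kk)" for j l
  proof (rule ccontr)
    assume "\<not> k \<le> l"
    then have lk: "l < k" by simp
    obtain c where c: "c mod int n = int j" "c \<le> int p" "int p - int n < c" "int p + int kk \<le> c + int l"
      "Ch j l \<in> T" "c = int p \<Longrightarrow> j = p \<and> l \<noteq> kk" using enc_lift[OF q p] by blast
    show False
    proof (cases "c = int p")
      case True
      then have "j = p" "l \<noteq> kk" using c(6) by auto
      moreover have "l \<le> kk" using mx c(5) \<open>j = p\<close> lk by simp
      moreover have "kk \<le> l" using c(4) True by simp
      ultimately show False by simp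
    next
      case False
      have pm: "int p mod int n = int p" using p by simp
      show False
        by (rule crossCC[OF c(5) pk _ c(1) pm]) (use False lk c(2,4) kk1 in auto)
    qed
  qed
  have "ownS (Enc p (int kk)) = (p, k)"
    by (rule own_eq) (use kk1 p0 minl in auto)
  then show ?thesis using kk1 p0 by auto
qed

lemma lbl_down:
  assumes sj: "Sp j \<in> T" and kk: "kk = 1 \<or> Ch j kk \<in> T" and mx: "\<And>k. Ch j k \<in> T \<Longrightarrow> k \<le> kk"
  shows "lbl (Out j (int kk)) = lbl (Down j)"
proof -
  have jn: "j < n" using spT' sj by auto
  have kk1: "1 \<le> kk" using kk chT by force
  have jm: "int j mod int n = int j" using jn by simp
  have E: "Enc j (int kk) = {}"
  proof (rule ccontr)
    assume "Enc j (int kk) \<noteq> {}"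
    then obtain i l where q: "(i,l) \<in> Enc j (int kk)" by auto
    obtain c where c: "c mod int n = int i" "c \<le> int j" "int j - int n < c" "int j + int kk \<le> c + int l"
      "Ch i l \<in> T" "c = int j \<Longrightarrow> i = j \<and> l \<noteq> kk" using enc_lift[OF q jn] by blast
    show False
    proof (cases "c = int j")
      case True
      then have "i = j" "l \<noteq> kk" using c(6) by auto
      moreover have "l \<le> kk" using mx c(5) \<open>i = j\<close> by simp
      moreover have "kk \<le> l" using c(4) True by simp
      ultimately show False by simp
    next
      case False
      show False
        by (rule crossCS[OF c(5) sj c(1) jm]) (use False c(2,4) kk1 in auto)
    qed
  qed
  have "nsp (int j + 1) = nsp (int j + 1 + int (kk - 1))"
  proof (rule nsp_skip)
    fix r assume r: "r < kk - 1"
    then have ck: "Ch j kk \<in> T" using kk by auto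
    show "Sp (bmod n (int j + 1 + int r)) \<notin> T"
    proof
      assume sp: "Sp (bmod n (int j + 1 + int r)) \<in> T"
      show False
        by (rule crossCS[OF ck sp jm, of "int j + 1 + int r"]) (use r int_bmod[OF npos] in auto)
    qed
  qed
  moreover have "int j + 1 + int (kk - 1) = int j + int kk" using kk1 by simp
  ultimately show ?thesis using E kk1 by simp
qed

lemma lbl_up:
  assumes si: "Sp i \<in> T"
  shows "lbl (nxt n T (Up i)) = Sp i"
proof -
  have iN: "i < n" using spT' si by auto
  have fin: "finite {j. Sp j \<in> T}" using spT' by (metis finite_nat_set_iff_bounded mem_Collect_eq)
  show ?thesis
  proof (cases "\<exists>j. Sp j \<in> T \<and> j < i")
    case True
    define J where "J = Max {j. Sp j \<in> T \<and> j < i}"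
    have fin2: "finite {j. Sp j \<in> T \<and> j < i}" by simp
    have J: "Sp J \<in> T" "J < i" using Max_in[OF fin2] True unfolding J_def by auto
    have nx: "nxt n T (Up i) = Down J" using True unfolding nxt_up J_def by simp
    have "nsp (int J + 1) = nsp (int J + 1 + int (i - J - 1))"
    proof (rule nsp_skip)
      fix r assume r: "r < i - J - 1"
      have b: "bmod n (int J + 1 + int r) = J + 1 + r" unfolding bmod_def using r iN
        by (simp add: nat_add_distrib)
      show "Sp (bmod n (int J + 1 + int r)) \<notin> T"
      proof
        assume "Sp (bmod n (int J + 1 + int r)) \<in> T"
        then have "Sp (J + 1 + r) \<in> T" using b by simp
        then have "J + 1 + r \<in> {j. Sp j \<in> T \<and> j < i}" using r by auto
        then have "J + 1 + r \<le> J" using Max_ge[OF fin2] J_def by blast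
        then show False by simp
      qed
    qed
    moreover have "int J + 1 + int (i - J - 1) = int i" using J by simp
    moreover have "nsp (int i) = i" using nsp0[of "int i"] si iN unfolding bmod_def by simp
    ultimately show ?thesis using nx by simp
  next
    case False
    define J where "J = Max {j. Sp j \<in> T}"
    have J: "Sp J \<in> T" using Max_in[OF fin] si unfolding J_def by auto
    have Jn: "J < n" using spT' J by auto
    have iJ: "i \<le> J" unfolding J_def using fin si by (intro Max_ge) auto
    have nx: "nxt n T (Up i) = Down J" unfolding nxt_up J_def if_not_P[OF False] by simp
    have "nsp (int J + 1) = nsp (int J + 1 + int (n + i - J - 1))"
    proof (rule nsp_skip)
      fix r assume r: "r < n + i - J - 1"
      show "Sp (bmod n (int J + 1 + int r)) \<notin> T"
      proof
        assume sp: "Sp (bmod n (int J + 1 + int r)) \<in> T"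
        show False
        proof (cases "J + 1 + r < n")
          case True
          have "bmod n (int J + 1 + int r) = J + 1 + r" unfolding bmod_def using True
            by (simp add: nat_add_distrib)
          then have "Sp (J + 1 + r) \<in> T" using sp by simp
          then have "J + 1 + r \<le> J" unfolding J_def using fin by (intro Max_ge) auto
          then show False by simp
        next
          case F: False
          have "int (bmod n (int J + 1 + int r)) = (int J + 1 + int r - int n) mod int n"
            using int_bmod[OF npos] by simp
          also have "\<dots> = int J + 1 + int r - int n"
            using F r iN by (intro mod_pos_pos_trivial) auto
          finally have b: "int (bmod n (int J + 1 + int r)) = int J + 1 + int r - int n" .
          then have "bmod n (int J + 1 + int r) < i" using r iN by linarith
          then show False using sp False by blast
        qed
      qed
    qed
    moreover have "int J + 1 + int (n + i - J - 1) = int n + int i" using Jn by simp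
    moreover have "nsp (int n + int i) = i"
    proof -
      have "nsp (int n + int i) = nsp (int i)" by (rule nsp_cong) simp
      also have "\<dots> = i" using nsp0[of "int i"] si iN unfolding bmod_def by simp
      finally show ?thesis .
    qed
    ultimately show ?thesis using nx by simp
  qed
qed




primrec cl :: "arc \<Rightarrow> dart" where
  "cl (Ch i k) = Out (bmod n (int i + int k)) (- int k)"
| "cl (Sp j) = Up j"

primrec opd :: "arc \<Rightarrow> dart" where
  "opd (Ch i k) = Out i (int k)"
| "opd (Sp j) = Down j"

primrec unop :: "dart \<Rightarrow> arc" where
  "unop (Out i k) = Ch i (nat k)"
| "unop (Up j) = Sp j"
| "unop (Down j) = Sp j"

lemma T_fin: "finite T"
proof -
  have "{a. is_arc n a} \<subseteq> (\<lambda>(i,k). Ch i k) ` ({..<n} \<times> {..n}) \<union> Sp ` {..<n}"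
  proof
    fix a assume "a \<in> {a. is_arc n a}"
    then show "a \<in> (\<lambda>(i,k). Ch i k) ` ({..<n} \<times> {..n}) \<union> Sp ` {..<n}"
      by (cases a) (auto simp: is_arc_def)
  qed
  then have "finite {a. is_arc n a}" by (rule finite_subset) auto
  then show ?thesis using arcsT finite_subset by blast
qed

lemma lbl_cl_inv: "a \<in> T \<Longrightarrow> lbl (cl a) = a"
proof (cases a)
  case (Ch i k)
  assume "a \<in> T"
  then have i: "i < n" and k: "2 \<le> k" using chT Ch by auto
  have "bmod n (int (bmod n (int i + int k)) + - int k) = i"
    using bmod_cancel[OF i, of "int k"] by simp
  then show ?thesis using Ch k by simp
qed simp

lemma unop_inv: "a \<in> T \<Longrightarrow> unop (opd a) = a"
  by (cases a) auto

lemma darts_eq: "darts n T = (\<lambda>i. Out i 1) ` {..<n} \<union> cl ` T \<union> opd ` T"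
proof (rule set_eqI, rule iffI)
  fix x assume "x \<in> darts n T"
  then consider i where "x = Out i 1" "i < n" | i k where "Ch i k \<in> T" "x = Out i (int k)"
    | i k where "Ch i k \<in> T" "x = Out (bmod n (int i + int k)) (- int k)"
    | i where "Sp i \<in> T" "x = Up i" | i where "Sp i \<in> T" "x = Down i"
    unfolding darts_def by blast
  then show "x \<in> (\<lambda>i. Out i 1) ` {..<n} \<union> cl ` T \<union> opd ` T"
  proof cases
    case 1 then show ?thesis by blast
  next
    case (2 i k) then have "x = opd (Ch i k)" by simp
    then show ?thesis using 2 by blast
  next
    case (3 i k) then have "x = cl (Ch i k)" by simp
    then show ?thesis using 3 by blast
  next
    case (4 i) then have "x = cl (Sp i)" by simp
    then show ?thesis using 4 by blast
  next
    case (5 i) then have "x = opd (Sp i)" by simp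
    then show ?thesis using 5 by blast
  qed
next
  fix x assume "x \<in> (\<lambda>i. Out i 1) ` {..<n} \<union> cl ` T \<union> opd ` T"
  then consider i where "x = Out i 1" "i < n" | a where "a \<in> T" "x = cl a" | a where "a \<in> T" "x = opd a"
    by blast
  then show "x \<in> darts n T"
  proof cases
    case 1 then show ?thesis unfolding darts_def by blast
  next
    case (2 a)
    show ?thesis
    proof (cases a)
      case (Ch i k)
      with 2 have "x \<in> {Out (bmod n (int i + int k)) (- int k) |i k. Ch i k \<in> T}" by auto
      then show ?thesis unfolding darts_def by blast
    next
      case (Sp j)
      with 2 have "x \<in> {Up i |i. Sp i \<in> T}" by auto
      then show ?thesis unfolding darts_def by blast
    qed
  next
    case (3 a)
    show ?thesis
    proof (cases a)
      case (Ch i k)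
      with 3 have "x \<in> {Out i (int k) |i k. Ch i k \<in> T}" by auto
      then show ?thesis unfolding darts_def by blast
    next
      case (Sp j)
      with 3 have "x \<in> {Down i |i. Sp i \<in> T}" by auto
      then show ?thesis unfolding darts_def by blast
    qed
  qed
qed

lemma darts_fin: "finite (darts n T)"
  unfolding darts_eq using T_fin by simp

lemma card_darts: "card (darts n T) = n + 2 * card T"
proof -
  have i1: "inj_on (\<lambda>i. Out i 1) {..<n}" by (auto simp: inj_on_def)
  have i2: "inj_on cl T" by (rule inj_on_inverseI[of _ lbl]) (rule lbl_cl_inv)
  have i3: "inj_on opd T" by (rule inj_on_inverseI[of _ unop]) (rule unop_inv)
  have d1: "(\<lambda>i. Out i 1) ` {..<n} \<inter> cl ` T = {}"
  proof -
    have "Out i 1 \<noteq> cl a" if "a \<in> T" for i a using that by (cases a) auto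
    then show ?thesis by blast
  qed
  have d2: "((\<lambda>i. Out i 1) ` {..<n} \<union> cl ` T) \<inter> opd ` T = {}"
  proof -
    have "Out i 1 \<noteq> opd a" if "a \<in> T" for i a using that chT by (cases a) force+
    moreover have "cl b \<noteq> opd a" if "a \<in> T" for a b using that chT by (cases a; cases b) force+
    ultimately show ?thesis by blast
  qed
  have "card (darts n T) = card ((\<lambda>i. Out i 1) ` {..<n} \<union> cl ` T) + card (opd ` T)"
    unfolding darts_eq using d2 T_fin by (intro card_Un_disjoint) auto
  also have "card ((\<lambda>i. Out i 1) ` {..<n} \<union> cl ` T) = card ((\<lambda>i. Out i 1) ` {..<n}) + card (cl ` T)"
    using d1 T_fin by (intro card_Un_disjoint) auto
  also have "card ((\<lambda>i. Out i 1) ` {..<n}) = n" using card_image[OF i1] by simp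
  also have "card (cl ` T) = card T" using card_image[OF i2] .
  also have "card (opd ` T) = card T" using card_image[OF i3] .
  finally show ?thesis by simp
qed




definition mu :: "nat \<Rightarrow> int \<Rightarrow> nat" where
  "mu a e = (if Enc a e \<noteq> {} then nat (int (snd (ownS (Enc a e))) - (int a - int (fst (ownS (Enc a e)))) mod int n - e)
             else Lsp (int a + e))"

lemma enc_c_shift:
  assumes d: "Out a e \<in> darts n T" and e: "1 \<le> e" and v: "v = bmod n (int a + e)"
    and nce: "\<And>k. Ch (bmod n (int v - int k)) k \<in> T \<Longrightarrow> \<not> int k > e" and q: "(j,l) \<in> Enc a e"
  shows "(int v - int j) mod int n = (int a - int j) mod int n + e"
proof -
  have a: "a < n" using d by (simp add: darts_Out)
  have iv: "int v = (int a + e) mod int n" using v int_bmod npos by simp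
  define r where "r = (int a - int j) mod int n"
  have cj: "Ch j l \<in> T" "r + e \<le> int l" "\<not> (j = a \<and> int l = e)" using q unfolding Enc_mem r_def by auto
  have j: "j < n" using chT cj by auto
  have ln: "l \<le> n" using chT cj by auto
  have r_nn: "0 \<le> r" unfolding r_def using npos by simp
  have cm: "(int a - r) mod int n = int j" unfolding r_def using mod_back[OF j] .
  have c6: "int a - r = int a \<Longrightarrow> j = a \<and> int l \<noteq> e"
  proof -
    assume h: "int a - r = int a"
    then have "int j = int a mod int n" using cm by simp
    then have "j = a" using a by simp
    then show ?thesis using cj(3) by simp
  qed
  have lt: "r + e < int l"
  proof (rule ccontr)
    assume "\<not> r + e < int l"
    then have eq: "int a - r + int l = int a + e" using cj(2) by linarith
    have "int l > e" "bmod n (int v - int l) = j" using enc_end[OF q a e v cm _ c6 eq] r_nn by auto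
    then show False using nce[of l] cj(1) by simp
  qed
  have "(int v - int j) mod int n = (int a + e - int j) mod int n" unfolding iv by (simp add: mod_diff_left_eq)
  also have "\<dots> = ((int a - int j) + e) mod int n" by (simp add: algebra_simps)
  also have "\<dots> = (r + e) mod int n" unfolding r_def by (rule mod_add_left_eq[symmetric])
  also have "\<dots> = r + e" using lt ln r_nn e by (intro mod_pos_pos_trivial) auto
  finally show ?thesis unfolding r_def .
qed

lemma fwd_cases:
  assumes d: "Out a e \<in> darts n T" and e: "1 \<le> e" and v: "v = bmod n (int a + e)"
  obtains (A) k0 where "Ch (bmod n (int v - int k0)) k0 \<in> T" "nxt n T (Out a e) = Out v (- int k0)"
      "lbl (Out a e) = Ch (bmod n (int v - int k0)) k0"
    | (B) "Sp v \<in> T" "nxt n T (Out a e) = Up v" "lbl (Out a e) = Sp v"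
    | (C) kk where "nxt n T (Out a e) = Out v (int kk)" "Out v (int kk) \<in> darts n T" "1 \<le> kk"
      "lbl (Out v (int kk)) = lbl (Out a e)" "mu v (int kk) < mu a e"
proof -
  have a: "a < n" using d by (simp add: darts_Out)
  have vn: "v < n" using v bmod_lt npos by simp
  have iv: "int v = (int a + e) mod int n" using v int_bmod npos by simp
  show ?thesis
  proof (cases "\<exists>k. Ch (bmod n (int v - int k)) k \<in> T \<and> int k > e")
    case True
    define k0 where "k0 = (LEAST k. Ch (bmod n (int v - int k)) k \<in> T \<and> int k > e)"
    have k0: "Ch (bmod n (int v - int k0)) k0 \<in> T \<and> int k0 > e"
      unfolding k0_def using True by (rule LeastI_ex)
    have mn: "k0 \<le> k" if "Ch (bmod n (int v - int k)) k \<in> T" "int k > e" for k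
      unfolding k0_def using that by (simp add: Least_le)
    have n1: "nxt n T (Out a e) = Out v (- int k0)" by (rule nxt_fwd_a[OF d e v]) (use k0 mn in auto)
    have l1: "lbl (Out a e) = Ch (bmod n (int v - int k0)) k0" by (rule lbl_fwd_a[OF d e v]) (use k0 mn in auto)
    show ?thesis by (rule A[OF conjunct1[OF k0] n1 l1])
  next
    case False
    then have nce: "\<And>k. Ch (bmod n (int v - int k)) k \<in> T \<Longrightarrow> \<not> int k > e" by blast
    show ?thesis
    proof (cases "Sp v \<in> T")
      case True
      show ?thesis by (rule B[OF True nxt_fwd_b[OF d e v nce True] lbl_fwd_b[OF d e v nce True]])
    next
      case sv: False
      define FE where "FE = {k. k = 1 \<or> Ch v k \<in> T}"
      have "FE \<subseteq> {..n}"
      proof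
        fix k assume "k \<in> FE"
        then have "k = 1 \<or> Ch v k \<in> T" unfolding FE_def by simp
        then show "k \<in> {..n}" using chT npos by force
      qed
      then have fin: "finite FE" by (rule finite_subset) simp
      define kk where "kk = Max FE"
      have "1 \<in> FE" unfolding FE_def by simp
      then have "kk \<in> FE" unfolding kk_def using Max_in[OF fin] by blast
      then have kk: "kk = 1 \<or> Ch v kk \<in> T" unfolding FE_def by simp
      have mx: "k \<le> kk" if "Ch v k \<in> T" for k
      proof -
        have "k \<in> FE" unfolding FE_def using that by simp
        then show ?thesis unfolding kk_def using Max_ge[OF fin] by blast
      qed
      have kk1: "1 \<le> kk" using kk chT by force
      have nx: "nxt n T (Out a e) = Out v (int kk)" by (rule nxt_fwd_c[OF d e v nce sv kk mx])
      have dd: "Out v (int kk) \<in> darts n T" unfolding darts_Out using kk vn chT by auto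
      have lb: "lbl (Out v (int kk)) = lbl (Out a e)" by (rule lbl_fwd_c[OF d e v nce sv kk mx])
      have ns: "\<And>r. r < kk \<Longrightarrow> Sp (bmod n (int v + int r)) \<notin> T" using nospoke_in[OF kk vn sv] .
      have mu_lt: "mu v (int kk) < mu a e"
      proof (cases "Enc a e = {}")
        case True
        have EE: "Enc v (int kk) = {}"
        proof (rule ccontr)
          assume "Enc v (int kk) \<noteq> {}"
          then have "lbl (Out v (int kk)) \<noteq> lbl (Out a e)" using True e kk1 by simp
          then show False using lb by simp
        qed
        have "Lsp (int a + e) = Lsp (int v)" by (rule Lsp_cong) (simp add: iv)
        also have "\<dots> = kk + Lsp (int v + int kk)" by (rule Lsp_skip) (rule ns)
        finally show ?thesis unfolding mu_def using True EE kk1 by simp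
      next
        case False
        obtain i k where ik: "ownS (Enc a e) = (i,k)" by (cases "ownS (Enc a e)")
        have ikm: "(i,k) \<in> Enc a e" using ownS_spec[OF False Enc_fin] ik by simp
        have EE: "Enc v (int kk) = Enc a e" by (rule enc_fwd_c[OF d e v nce sv kk mx])
        have sh: "(int v - int i) mod int n = (int a - int i) mod int n + e"
          by (rule enc_c_shift[OF d e v nce ikm])
        have "(i,k) \<in> Enc v (int kk)" using EE ikm by simp
        then have le: "(int v - int i) mod int n + int kk \<le> int k" unfolding Enc_mem by simp
        show ?thesis unfolding mu_def using False EE ik sh le kk1 by simp
      qed
      show ?thesis using C[OF nx dd kk1 lb mu_lt] .
    qed
  qed
qed




lemma maxch:
  assumes "2 \<le> B"
  obtains kk where "kk = 1 \<or> Ch v kk \<in> T" "kk < B" "\<And>k. Ch v k \<in> T \<Longrightarrow> k < B \<Longrightarrow> k \<le> kk"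
proof -
  define FL where "FL = {k. k < B \<and> (k = 1 \<or> Ch v k \<in> T)}"
  have fin: "finite FL" unfolding FL_def by simp
  have "1 \<in> FL" unfolding FL_def using assms by simp
  then have "Max FL \<in> FL" using Max_in[OF fin] by blast
  moreover have "k \<le> Max FL" if "Ch v k \<in> T" "k < B" for k
  proof -
    have "k \<in> FL" unfolding FL_def using that by simp
    then show ?thesis using Max_ge[OF fin] by blast
  qed
  ultimately show ?thesis using that unfolding FL_def by blast
qed

lemma maxch_all:
  obtains kk where "kk = 1 \<or> Ch v kk \<in> T" "\<And>k. Ch v k \<in> T \<Longrightarrow> k \<le> kk"
proof -
  have "2 \<le> n + 1" using npos by simp
  then obtain kk where "kk = 1 \<or> Ch v kk \<in> T" "\<And>k. Ch v k \<in> T \<Longrightarrow> k < n + 1 \<Longrightarrow> k \<le> kk"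
    using maxch by blast
  moreover have "k < n + 1" if "Ch v k \<in> T" for k using chT that by force
  ultimately show ?thesis using that by blast
qed

lemma closing_props:
  assumes d: "Out a e \<in> darts n T" and e: "\<not> 1 \<le> e"
  shows "nxt n T (Out a e) \<in> darts n T \<and> lbl (nxt n T (Out a e)) = lbl (Out a e) \<and> Out a e \<in> cl ` T"
proof -
  define p where "p = bmod n (int a + e)"
  define k where "k = nat (-e)"
  have a: "a < n" and e2: "e \<le> -2" and pk: "Ch p k \<in> T" using d e unfolding darts_Out p_def k_def by auto
  have ek: "e = - int k" unfolding k_def using e2 by simp
  have k2: "2 \<le> k" and pn: "p < n" using chT pk by auto
  have q: "a = bmod n (int p + int k)"
    unfolding p_def k_def using a e2 npos unfolding bmod_def by (simp add: mod_diff_left_eq)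
  obtain kk where kk: "kk = 1 \<or> Ch p kk \<in> T" "kk < k" "\<And>j. Ch p j \<in> T \<Longrightarrow> j < k \<Longrightarrow> j \<le> kk"
    using maxch[OF k2] by blast
  have nx: "nxt n T (Out a e) = Out p (int kk)" unfolding ek by (rule nxt_cl[OF pk q kk])
  have kk1: "1 \<le> kk" using kk chT by force
  have "Out p (int kk) \<in> darts n T" unfolding darts_Out using kk pn chT kk1 by auto
  moreover have "lbl (Out p (int kk)) = Ch p k" by (rule lbl_cl[OF pk kk])
  moreover have "lbl (Out a e) = Ch p k" using e unfolding p_def k_def by simp
  moreover have "Out a e = cl (Ch p k)" using q ek by simp
  then have "Out a e \<in> cl ` T" using pk by (metis image_eqI)
  ultimately show ?thesis using nx by simp
qed

lemma nxt_props:
  assumes d: "d \<in> darts n T"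
  shows "nxt n T d \<in> darts n T \<and> lbl (nxt n T d) = lbl d"
proof (cases d)
  case (Out a e)
  show ?thesis
  proof (cases "1 \<le> e")
    case e: True
    define v where "v = bmod n (int a + e)"
    have vn: "v < n" using v_def bmod_lt npos by simp
    have d': "Out a e \<in> darts n T" using d Out by simp
    from d' e v_def show ?thesis
    proof (cases rule: fwd_cases)
      case (A k0)
      have k2: "2 \<le> k0" using chT A(1) by auto
      have "Out v (- int k0) \<in> darts n T" unfolding darts_Out using A(1) vn k2 by simp
      moreover have "lbl (Out v (- int k0)) = Ch (bmod n (int v - int k0)) k0" using k2 by simp
      ultimately show ?thesis using A Out by simp
    next
      case B
      then show ?thesis using Out by (simp add: darts_Up)
    next
      case (C kk)
      then show ?thesis using Out by simp
    qed
  next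
    case False
    then show ?thesis using closing_props[of a e] d Out by simp
  qed
next
  case (Up i)
  have si: "Sp i \<in> T" using d Up by (simp add: darts_Up)
  have fin: "finite {j. Sp j \<in> T}" using spT' by (metis finite_nat_set_iff_bounded mem_Collect_eq)
  have "Sp (if (\<exists>j. Sp j \<in> T \<and> j < i) then Max {j. Sp j \<in> T \<and> j < i} else Max {j. Sp j \<in> T}) \<in> T"
  proof (cases "\<exists>j. Sp j \<in> T \<and> j < i")
    case True
    have "Max {j. Sp j \<in> T \<and> j < i} \<in> {j. Sp j \<in> T \<and> j < i}" by (rule Max_in) (use True in auto)
    then show ?thesis unfolding if_P[OF True] by simp
  next
    case False
    have "Max {j. Sp j \<in> T} \<in> {j. Sp j \<in> T}" by (rule Max_in[OF fin]) (use si in auto)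
    then show ?thesis unfolding if_not_P[OF False] by simp
  qed
  then have "nxt n T d \<in> darts n T" unfolding Up nxt_up darts_Down by simp
  moreover have "lbl (nxt n T d) = lbl d" using lbl_up[OF si] Up by simp
  ultimately show ?thesis by simp
next
  case (Down j)
  have sj: "Sp j \<in> T" using d Down by (simp add: darts_Down)
  have jn: "j < n" using spT' sj by auto
  obtain kk where kk: "kk = 1 \<or> Ch j kk \<in> T" "\<And>k. Ch j k \<in> T \<Longrightarrow> k \<le> kk" using maxch_all by blast
  have kk1: "1 \<le> kk" using kk chT by force
  have nx: "nxt n T (Down j) = Out j (int kk)" by (rule nxt_down[OF sj kk])
  have "Out j (int kk) \<in> darts n T" unfolding darts_Out using kk jn chT kk1 by auto
  moreover have "lbl (Out j (int kk)) = lbl (Down j)" by (rule lbl_down[OF sj kk])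
  ultimately show ?thesis using nx Down by simp
qed

lemma reach_fwd:
  "Out a e \<in> darts n T \<Longrightarrow> 1 \<le> e \<Longrightarrow> \<exists>j. (nxt n T ^^ j) (Out a e) \<in> cl ` T"
proof (induction "mu a e" arbitrary: a e rule: less_induct)
  case less
  define v where "v = bmod n (int a + e)"
  have vn: "v < n" using v_def bmod_lt npos by simp
  from less.prems(1,2) v_def show ?case
  proof (cases rule: fwd_cases)
    case (A k0)
    have "cl (Ch (bmod n (int v - int k0)) k0) = Out v (- int k0)"
      using bmod_cancel[OF vn, of "- int k0"] by simp
    then have "(nxt n T ^^ 1) (Out a e) \<in> cl ` T" using A by (metis One_nat_def funpow_0 funpow_Suc_right image_eqI o_apply)
    then show ?thesis by blast
  next
    case B
    then have "(nxt n T ^^ 1) (Out a e) \<in> cl ` T" by (metis One_nat_def funpow_0 funpow_Suc_right image_eqI o_apply cl.simps(2))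
    then show ?thesis by blast
  next
    case (C kk)
    obtain j where "(nxt n T ^^ j) (Out v (int kk)) \<in> cl ` T"
      using less.hyps[OF C(5) C(2)] C(3) by auto
    then have "(nxt n T ^^ Suc j) (Out a e) \<in> cl ` T" using C(1) by (simp only: funpow_Suc_right o_apply)
    then show ?thesis by blast
  qed
qed

lemma reach:
  assumes d: "d \<in> darts n T"
  shows "\<exists>j. (nxt n T ^^ j) d \<in> cl ` T"
proof (cases d)
  case (Out a e)
  show ?thesis
  proof (cases "1 \<le> e")
    case True then show ?thesis using reach_fwd d Out by simp
  next
    case False
    then have "d \<in> cl ` T" using closing_props[of a e] d Out by simp
    then have "(nxt n T ^^ 0) d \<in> cl ` T" by simp
    then show ?thesis by blast
  qed
next
  case (Up i)
  then have "d = cl (Sp i)" by simp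
  moreover have "Sp i \<in> T" using d Up by (simp add: darts_Up)
  ultimately have "d \<in> cl ` T" by (metis image_eqI)
  then have "(nxt n T ^^ 0) d \<in> cl ` T" by simp
  then show ?thesis by blast
next
  case (Down j)
  have sj: "Sp j \<in> T" using d Down by (simp add: darts_Down)
  have jn: "j < n" using spT' sj by auto
  obtain kk where kk: "kk = 1 \<or> Ch j kk \<in> T" "\<And>k. Ch j k \<in> T \<Longrightarrow> k \<le> kk" using maxch_all by blast
  have kk1: "1 \<le> kk" using kk chT by force
  have nx: "nxt n T (Down j) = Out j (int kk)" by (rule nxt_down[OF sj kk])
  have "Out j (int kk) \<in> darts n T" unfolding darts_Out using kk jn chT kk1 by auto
  then obtain i where "(nxt n T ^^ i) (Out j (int kk)) \<in> cl ` T" using reach_fwd kk1 by force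
  then have "(nxt n T ^^ Suc i) d \<in> cl ` T" using nx Down by (simp only: funpow_Suc_right o_apply)
  then show ?thesis by blast
qed




lemma rot_src: "x \<in> rot n T v \<Longrightarrow> dsrc x = V v"
  unfolding rot_iff by auto

lemma head_V:
  assumes "d \<in> darts n T" "\<And>i. d \<noteq> Up i"
  obtains v where "dhead n d = V v" "v < n"
proof (cases d)
  case (Out a e) then show ?thesis using that bmod_lt[OF npos] by simp
next
  case (Up i) then show ?thesis using assms by simp
next
  case (Down j) then show ?thesis using that assms(1) spT' by (simp add: darts_Down)
qed

lemma drev_rot:
  assumes d: "d \<in> darts n T" and h: "dhead n d = V v"
  shows "drev n d \<in> rot n T v \<and> dkey (drev n d) > -1"
proof (cases d)
  case (Out a e)
  have a: "a < n" and v: "v = bmod n (int a + e)" using d h Out by (auto simp: darts_Out)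
  have vn: "v < n" using v bmod_lt npos by simp
  have dr: "drev n d = Out v (-e)" using Out v by simp
  from d Out consider "e = 1" | "e \<ge> 2" "Ch a (nat e) \<in> T" | "e \<le> -2" "Ch (bmod n (int a + e)) (nat (-e)) \<in> T"
    by (auto simp: darts_Out)
  then show ?thesis
  proof cases
    case 1 then show ?thesis unfolding dr rot_iff by simp
  next
    case 2
    have "bmod n (int v + - e) = a" using bmod_cancel[OF a, of e] v by simp
    then have "Out v (-e) \<in> darts n T" unfolding darts_Out using 2 vn by simp
    moreover have "0 < 1 / real_of_int e" using 2 by simp
    then have "-1 < 1 / real_of_int e" by linarith
    ultimately show ?thesis unfolding dr rot_iff by simp
  next
    case 3
    have "bmod n (int v + - e) = a" using bmod_cancel[OF a, of e] v by simp
    then have "Out v (-e) \<in> darts n T" unfolding darts_Out using 3 vn v by simp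
    moreover have "1 / real_of_int (-e) \<le> 1 / real_of_int 2" using inv_le[of "-e" 2] 3 by simp
    then have "-1 < 1 / real_of_int e" by simp
    ultimately show ?thesis unfolding dr rot_iff using 3 by simp
  qed
next
  case (Up i) then show ?thesis using h by simp
next
  case (Down j)
  then show ?thesis using d h by (simp add: darts_Down darts_Up rot_iff)
qed

lemma drev_inj:
  assumes "d1 \<in> darts n T" "d2 \<in> darts n T" "drev n d1 = drev n d2"
  shows "d1 = d2"
proof (cases d1)
  case (Out a e)
  then obtain a2 where d2: "d2 = Out a2 e" "bmod n (int a + e) = bmod n (int a2 + e)"
    using assms(3) by (cases d2) auto
  have "a < n" "a2 < n" using assms(1,2) Out d2 by (auto simp: darts_Out)
  then have "a = a2" using bmod_cancel[of a e] bmod_cancel[of a2 e] d2(2) by metis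
  then show ?thesis using Out d2 by simp
next
  case (Up i) then show ?thesis using assms(3) by (cases d2) auto
next
  case (Down i) then show ?thesis using assms(3) by (cases d2) auto
qed

lemma nxt_spec:
  assumes d: "d \<in> darts n T" and h: "dhead n d = V v" and vn: "v < n"
  shows "nxt n T d \<in> rot n T v \<and> dkey (nxt n T d) < dkey (drev n d) \<and>
    (\<forall>y\<in>rot n T v. dkey y < dkey (drev n d) \<longrightarrow> dkey y \<le> dkey (nxt n T d))"
proof -
  define Y where "Y = {y \<in> rot n T v. dkey y < dkey (drev n d)}"
  have "rot n T v \<subseteq> darts n T \<union> {Out v (-1)}" using rot_iff by blast
  moreover have "finite (darts n T \<union> {Out v (-1)})" using darts_fin by simp
  ultimately have "finite (rot n T v)" by (rule finite_subset)
  then have fin: "finite Y" unfolding Y_def by simp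
  have "Out v 1 \<in> darts n T" using vn by (simp add: darts_Out)
  then have o1: "Out v 1 \<in> Y" unfolding Y_def rot_iff using drev_rot[OF d h] by simp
  have "Max (dkey ` Y) \<in> dkey ` Y" using fin o1 by (intro Max_in) auto
  then obtain x where x: "x \<in> Y" "dkey x = Max (dkey ` Y)" by auto
  have mx: "dkey y \<le> dkey x" if "y \<in> Y" for y using x(2) fin that by simp
  have "nxt n T d = x"
    by (rule nxt_V[OF h]) (use x mx in \<open>auto simp: Y_def\<close>)
  moreover have "x \<in> rot n T v" "dkey x < dkey (drev n d)" using x(1) unfolding Y_def by auto
  moreover have "\<forall>y\<in>rot n T v. dkey y < dkey (drev n d) \<longrightarrow> dkey y \<le> dkey x"
    using mx unfolding Y_def by blast
  ultimately show ?thesis by simp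
qed

lemma nxt_inj:
  assumes d1: "d1 \<in> darts n T" and d2: "d2 \<in> darts n T" and eq: "nxt n T d1 = nxt n T d2"
  shows "d1 = d2"
proof -
  have down: "\<And>j. nxt n T d \<noteq> Down j" if dd: "d \<in> darts n T" "\<And>i. d \<noteq> Up i" for d
  proof -
    obtain v where v: "dhead n d = V v" "v < n" using head_V[OF dd] by blast
    have "nxt n T d \<in> rot n T v" using nxt_spec[OF dd(1) v] by simp
    then have "dsrc (nxt n T d) = V v" by (rule rot_src)
    then show "\<And>j. nxt n T d \<noteq> Down j" by auto
  qed
  have upc: "\<exists>j. nxt n T (Up i) = Down j" for i unfolding nxt_up by simp
  show ?thesis
  proof (cases "\<exists>i. d1 = Up i")
    case True
    then obtain i1 where i1: "d1 = Up i1" by blast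
    have "\<exists>i. d2 = Up i"
    proof (rule ccontr)
      assume "\<not> (\<exists>i. d2 = Up i)"
      then have "\<And>i. d2 \<noteq> Up i" by blast
      then have nd: "\<And>j. nxt n T d2 \<noteq> Down j" by (rule down[OF d2])
      obtain j where "nxt n T (Up i1) = Down j" using upc by blast
      then show False using nd eq i1 by metis
    qed
    then obtain i2 where i2: "d2 = Up i2" by blast
    have s1: "Sp i1 \<in> T" "Sp i2 \<in> T" using d1 d2 i1 i2 by (auto simp: darts_Up)
    have "nxt n T (Up i1) = nxt n T (Up i2)" using eq i1 i2 by simp
    then have "lbl (nxt n T (Up i1)) = lbl (nxt n T (Up i2))" by (rule arg_cong)
    then have "Sp i1 = Sp i2" unfolding lbl_up[OF s1(1)] lbl_up[OF s1(2)] .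
    then show ?thesis using i1 i2 by simp
  next
    case False
    have n2: "\<nexists>i. d2 = Up i"
    proof
      assume "\<exists>i. d2 = Up i"
      then obtain i2 where i2: "d2 = Up i2" by blast
      have "\<And>i. d1 \<noteq> Up i" using False by blast
      then have nd: "\<And>j. nxt n T d1 \<noteq> Down j" by (rule down[OF d1])
      obtain j where "nxt n T (Up i2) = Down j" using upc by blast
      then show False using nd eq i2 by metis
    qed
    obtain v1 where v1: "dhead n d1 = V v1" "v1 < n" using head_V[OF d1] False by blast
    obtain v2 where v2: "dhead n d2 = V v2" "v2 < n" using head_V[OF d2] n2 by blast
    note s1 = nxt_spec[OF d1 v1] and s2 = nxt_spec[OF d2 v2]
    have "V v1 = V v2" using rot_src[of "nxt n T d1" v1] rot_src[of "nxt n T d2" v2] s1 s2 eq by simp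
    then have vv: "v1 = v2" by simp
    have r1: "drev n d1 \<in> rot n T v1" using drev_rot[OF d1 v1(1)] by simp
    have r2: "drev n d2 \<in> rot n T v1" using drev_rot[OF d2 v2(1)] vv by simp
    have "\<not> dkey (drev n d1) < dkey (drev n d2)"
    proof
      assume lt: "dkey (drev n d1) < dkey (drev n d2)"
      then have "dkey (drev n d1) \<le> dkey (nxt n T d2)" using s2 r1 vv by auto
      then show False using s1 eq by simp
    qed
    moreover have "\<not> dkey (drev n d2) < dkey (drev n d1)"
    proof
      assume lt: "dkey (drev n d2) < dkey (drev n d1)"
      then have "dkey (drev n d2) \<le> dkey (nxt n T d1)" using s1 r2 by auto
      then show False using s2 eq by simp
    qed
    ultimately have "dkey (drev n d1) = dkey (drev n d2)" by simp
    then have "drev n d1 = drev n d2" using key_inj r1 r2 by blast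
    then show ?thesis using drev_inj d1 d2 by blast
  qed
qed


end


lemma fp_in: "f ` S \<subseteq> S \<Longrightarrow> x \<in> S \<Longrightarrow> (f ^^ k) x \<in> S"
  by (induction k) auto

lemma fp_cancel:
  assumes "inj_on f S" "f ` S \<subseteq> S" "x \<in> S" "(f ^^ (i + m)) x = (f ^^ i) x"
  shows "(f ^^ m) x = x"
  using assms(4)
proof (induction i)
  case 0 then show ?case by simp
next
  case (Suc i)
  have "f ((f ^^ (i + m)) x) = f ((f ^^ i) x)" using Suc.prems by simp
  moreover have "(f ^^ (i + m)) x \<in> S" "(f ^^ i) x \<in> S" using fp_in[OF assms(2,3)] by auto
  ultimately have "(f ^^ (i + m)) x = (f ^^ i) x" using assms(1) by (meson inj_onD)
  then show ?case by (rule Suc.IH)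
qed

lemma fp_period:
  assumes "finite S" "inj_on f S" "f ` S \<subseteq> S" "x \<in> S"
  shows "\<exists>p>0. (f ^^ p) x = x"
proof -
  have "\<not> inj_on (\<lambda>k. (f ^^ k) x) {..card S}"
  proof
    assume "inj_on (\<lambda>k. (f ^^ k) x) {..card S}"
    moreover have "(\<lambda>k. (f ^^ k) x) ` {..card S} \<subseteq> S" using fp_in[OF assms(3,4)] by auto
    ultimately have "card {..card S} \<le> card S" using card_inj_on_le assms(1) by blast
    then show False by simp
  qed
  then obtain i j where ij: "i \<noteq> j" "(f ^^ i) x = (f ^^ j) x" unfolding inj_on_def by blast
  show ?thesis
  proof (cases "i < j")
    case True
    then have "(f ^^ (i + (j - i))) x = (f ^^ i) x" using ij by simp
    then have "(f ^^ (j - i)) x = x" by (rule fp_cancel[OF assms(2,3,4)])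
    then show ?thesis using True by (intro exI[of _ "j - i"]) simp
  next
    case False
    then have "j < i" using ij by simp
    then have "(f ^^ (j + (i - j))) x = (f ^^ j) x" using ij by simp
    then have "(f ^^ (i - j)) x = x" by (rule fp_cancel[OF assms(2,3,4)])
    then show ?thesis using \<open>j < i\<close> by (intro exI[of _ "i - j"]) simp
  qed
qed

lemma fp_mult: "(f ^^ p) x = x \<Longrightarrow> (f ^^ (p * m)) x = x"
proof (induction m)
  case 0 then show ?case by simp
next
  case (Suc m)
  have "(f ^^ (p * Suc m)) x = (f ^^ p) ((f ^^ (p * m)) x)" by (simp only: mult_Suc_right funpow_add o_apply)
  then show ?case using Suc by simp
qed

lemma fp_back:
  assumes "finite S" "inj_on f S" "f ` S \<subseteq> S" "x \<in> S"
  shows "\<exists>k'. (f ^^ k') ((f ^^ k) x) = x"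
proof -
  obtain p where p: "p > 0" "(f ^^ p) x = x" using fp_period[OF assms] by blast
  have "(f ^^ (p * k - k)) ((f ^^ k) x) = (f ^^ (p * k - k + k)) x" by (simp add: funpow_add)
  also have "p * k - k + k = p * k"
  proof -
    have "k \<le> p * k" using p(1) by simp
    then show ?thesis by simp
  qed
  also have "(f ^^ (p * k)) x = x" using fp_mult[OF p(2)] .
  finally show ?thesis by blast
qed

lemma orb_eq:
  assumes "finite S" "inj_on f S" "f ` S \<subseteq> S" "x \<in> S" "y \<in> {(f ^^ k) x | k. True}"
  shows "{(f ^^ k) y | k. True} = {(f ^^ k) x | k. True}"
proof -
  obtain k where k: "y = (f ^^ k) x" using assms(5) by blast
  obtain k' where k': "(f ^^ k') y = x" using fp_back[OF assms(1-4)] k by blast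
  show ?thesis
  proof (rule set_eqI, rule iffI)
    fix z assume "z \<in> {(f ^^ k) y | k. True}"
    then obtain j where "z = (f ^^ j) y" by blast
    then have "z = (f ^^ (j + k)) x" using k by (simp add: funpow_add)
    then show "z \<in> {(f ^^ k) x | k. True}" by blast
  next
    fix z assume "z \<in> {(f ^^ k) x | k. True}"
    then obtain j where "z = (f ^^ j) x" by blast
    then have "z = (f ^^ (j + k')) y" using k' by (simp add: funpow_add)
    then show "z \<in> {(f ^^ k) y | k. True}" by blast
  qed
qed

context PT begin

lemma nxt_maps: "nxt n T ` darts n T \<subseteq> darts n T"
  using nxt_props by auto

lemma nxt_inj_on: "inj_on (nxt n T) (darts n T)"
  by (rule inj_onI) (rule nxt_inj)

lemma face_sub: "d \<in> darts n T \<Longrightarrow> face n T d \<subseteq> darts n T"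
  unfolding face_def using fp_in[OF nxt_maps] by auto

lemma face_self: "d \<in> face n T d"
proof -
  have "d = (nxt n T ^^ 0) d" by simp
  then show ?thesis unfolding face_def by blast
qed

lemma face_eq: "d \<in> darts n T \<Longrightarrow> x \<in> face n T d \<Longrightarrow> face n T x = face n T d"
  unfolding face_def by (rule orb_eq[OF darts_fin nxt_inj_on nxt_maps])

lemma face_lbl: "d \<in> darts n T \<Longrightarrow> x \<in> face n T d \<Longrightarrow> lbl x = lbl d"
proof -
  assume d: "d \<in> darts n T" and "x \<in> face n T d"
  then obtain k where k: "x = (nxt n T ^^ k) d" unfolding face_def by blast
  have "(nxt n T ^^ k) d \<in> darts n T \<and> lbl ((nxt n T ^^ k) d) = lbl d"
  proof (induction k)
    case 0 then show ?case using d by simp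
  next
    case (Suc k)
    then show ?case using nxt_props[of "(nxt n T ^^ k) d"] by simp
  qed
  then show ?thesis using k by simp
qed

lemma face_cl: "a \<in> T \<Longrightarrow> face n T (cl a) = {d \<in> darts n T. lbl d = a}"
proof (rule set_eqI, rule iffI)
  assume a: "a \<in> T"
  have cd: "cl a \<in> darts n T" unfolding darts_eq using a by blast
  fix x assume x: "x \<in> face n T (cl a)"
  have "x \<in> darts n T" using face_sub[OF cd] x by blast
  moreover have "lbl x = lbl (cl a)" by (rule face_lbl[OF cd x])
  ultimately show "x \<in> {d \<in> darts n T. lbl d = a}" using lbl_cl_inv[OF a] by simp
next
  assume a: "a \<in> T"
  fix x assume "x \<in> {d \<in> darts n T. lbl d = a}"
  then have x: "x \<in> darts n T" "lbl x = a" by auto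
  obtain j where j: "(nxt n T ^^ j) x \<in> cl ` T" using reach[OF x(1)] by blast
  then obtain b where b: "b \<in> T" "(nxt n T ^^ j) x = cl b" by blast
  have "(nxt n T ^^ j) x \<in> face n T x" unfolding face_def by blast
  then have "lbl (cl b) = a" using face_lbl[OF x(1)] b x(2) by metis
  then have "b = a" using lbl_cl_inv[OF b(1)] by simp
  then have "cl a \<in> face n T x" using b \<open>(nxt n T ^^ j) x \<in> face n T x\<close> by simp
  then have "face n T (cl a) = face n T x" using face_eq[OF x(1)] by blast
  then show "x \<in> face n T (cl a)" using face_self by simp
qed

lemma faces_eq: "faces n T = (\<lambda>a. face n T (cl a)) ` T"
proof (rule set_eqI, rule iffI)
  fix F assume "F \<in> faces n T"
  then obtain d where d: "d \<in> darts n T" "F = face n T d" unfolding faces_def by blast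
  obtain j where j: "(nxt n T ^^ j) d \<in> cl ` T" using reach[OF d(1)] by blast
  then obtain b where b: "b \<in> T" "(nxt n T ^^ j) d = cl b" by blast
  have "(nxt n T ^^ j) d \<in> face n T d" unfolding face_def by blast
  then have "face n T (cl b) = F" using face_eq[OF d(1)] b d(2) by metis
  then show "F \<in> (\<lambda>a. face n T (cl a)) ` T" using b by blast
next
  fix F assume "F \<in> (\<lambda>a. face n T (cl a)) ` T"
  then obtain a where "a \<in> T" "F = face n T (cl a)" by blast
  moreover have "cl a \<in> darts n T" unfolding darts_eq using \<open>a \<in> T\<close> by blast
  ultimately show "F \<in> faces n T" unfolding faces_def by blast
qed

lemma card_faces: "card (faces n T) = card T"
proof -
  have "inj_on (\<lambda>a. face n T (cl a)) T"
  proof (rule inj_onI)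
    fix a b assume ab: "a \<in> T" "b \<in> T" "face n T (cl a) = face n T (cl b)"
    have "cl b \<in> face n T (cl b)" by (rule face_self)
    then have "cl b \<in> {d \<in> darts n T. lbl d = a}" using ab face_cl by metis
    then show "a = b" using lbl_cl_inv[OF ab(2)] by simp
  qed
  then show ?thesis unfolding faces_eq by (rule card_image)
qed

lemma sum_faces: "sum card (faces n T) = card (darts n T)"
proof -
  have U: "\<Union> (faces n T) = darts n T"
  proof
    show "\<Union> (faces n T) \<subseteq> darts n T" unfolding faces_def using face_sub by blast
    show "darts n T \<subseteq> \<Union> (faces n T)" unfolding faces_def using face_self by blast
  qed
  have "pairwise disjnt (faces n T)"
  proof (rule pairwiseI)
    fix F G assume F: "F \<in> faces n T" and G: "G \<in> faces n T" and ne: "F \<noteq> G"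
    obtain d where d: "d \<in> darts n T" "F = face n T d" using F unfolding faces_def by blast
    obtain d' where d': "d' \<in> darts n T" "G = face n T d'" using G unfolding faces_def by blast
    show "disjnt F G"
    proof (rule ccontr)
      assume "\<not> disjnt F G"
      then obtain z where z: "z \<in> F" "z \<in> G" unfolding disjnt_def by blast
      have "face n T z = face n T d" using face_eq[OF d(1)] z(1) d(2) by blast
      moreover have "face n T z = face n T d'" using face_eq[OF d'(1)] z(2) d'(2) by blast
      ultimately show False using ne d(2) d'(2) by simp
    qed
  qed
  moreover have "finite A" if AA: "A \<in> faces n T" for A
  proof -
    obtain d where "d \<in> darts n T" "A = face n T d" using AA unfolding faces_def by blast
    then show ?thesis using face_sub darts_fin finite_subset by metis
  qed
  ultimately have "card (\<Union> (faces n T)) = sum card (faces n T)" by (rule card_Union_disjoint)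
  then show ?thesis using U by simp
qed

lemma count:
  assumes "\<forall>F \<in> faces n T. card F = m + 2"
  shows "m * card T = n"
proof -
  have "sum card (faces n T) = card (faces n T) * (m + 2)" using assms by simp
  then have "card T * (m + 2) = n + 2 * card T" using sum_faces card_darts card_faces by simp
  then show ?thesis by (simp add: algebra_simps)
qed


end


context PT begin

lemma down_from_up:
  assumes "Sp j \<in> T"
  shows "\<exists>i. Sp i \<in> T \<and> nxt n T (Up i) = Down j"
proof -
  define SP where "SP = {i. Sp i \<in> T}"
  have fin: "finite SP" unfolding SP_def using spT' by (metis finite_nat_set_iff_bounded mem_Collect_eq)
  have sub: "nxt n T ` (Up ` SP) \<subseteq> Down ` SP"
  proof
    fix x assume "x \<in> nxt n T ` (Up ` SP)"
    then obtain i where i: "Sp i \<in> T" "x = nxt n T (Up i)" unfolding SP_def by blast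
    have "x \<in> darts n T" using nxt_props[of "Up i"] i by (simp add: darts_Up)
    moreover obtain k where "x = Down k" using i(2) unfolding nxt_up by simp
    ultimately show "x \<in> Down ` SP" unfolding SP_def by (auto simp: darts_Down)
  qed
  have inj: "inj_on (nxt n T) (Up ` SP)"
  proof (rule inj_on_subset[OF nxt_inj_on])
    show "Up ` SP \<subseteq> darts n T" unfolding SP_def using darts_Up by blast
  qed
  have "card (nxt n T ` (Up ` SP)) = card (Up ` SP)" using card_image[OF inj] .
  also have "\<dots> = card SP" by (rule card_image) (auto simp: inj_on_def)
  also have "\<dots> = card (Down ` SP)" by (rule card_image[symmetric]) (auto simp: inj_on_def)
  finally have ceq: "card (nxt n T ` (Up ` SP)) = card (Down ` SP)" .
  have finD: "finite (Down ` SP)" using fin by simp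
  have eqs: "nxt n T ` (Up ` SP) = Down ` SP" by (rule card_subset_eq[OF finD sub ceq])
  have "Down j \<in> Down ` SP" using assms unfolding SP_def by simp
  then have "Down j \<in> nxt n T ` (Up ` SP)" using eqs by simp
  then obtain u where u: "u \<in> Up ` SP" "Down j = nxt n T u" by blast
  then obtain i where i: "i \<in> SP" "u = Up i" by blast
  have "Sp i \<in> T" using i(1) unfolding SP_def by simp
  moreover have "nxt n T (Up i) = Down j" using u(2) i(2) by simp
  ultimately show ?thesis by blast
qed

lemma T0_Lsp:
  assumes Tdef: "T = {Sp s | s. s < n \<and> m dvd s}" and md: "m dvd n" and m1: "1 \<le> m"
  shows "Lsp x = nat ((- x) mod int m)"
proof -
  have P: "Sp (bmod n y) \<in> T \<longleftrightarrow> int m dvd y" for y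
  proof -
    have "Sp (bmod n y) \<in> T \<longleftrightarrow> m dvd bmod n y" unfolding Tdef using bmod_lt[OF npos] by simp
    also have "\<dots> \<longleftrightarrow> int m dvd int (bmod n y)" by (simp only: int_dvd_int_iff)
    also have "\<dots> \<longleftrightarrow> int m dvd y mod int n" using int_bmod[OF npos, of y] by simp
    also have "\<dots> \<longleftrightarrow> int m dvd y" using md by (simp add: dvd_mod_iff)
    finally show ?thesis .
  qed
  have "Lsp x = (LEAST r. int m dvd x + int r)" unfolding Lsp_def P by simp
  also have "\<dots> = nat ((- x) mod int m)"
  proof (rule Least_equality)
    have "(x + (- x) mod int m) mod int m = 0" by (simp add: mod_add_right_eq)
    then show "int m dvd x + int (nat ((- x) mod int m))" using m1 by (simp add: dvd_eq_mod_eq_0)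
  next
    fix r assume "int m dvd x + int r"
    then obtain q where q: "x + int r = int m * q" by (auto simp: dvd_def)
    then have "- x = int r - int m * q" by simp
    moreover have "int r - int m * q = int r + (- q) * int m" by simp
    ultimately have "(- x) mod int m = int r mod int m" by (simp only: mod_mult_self1)
    also have "\<dots> \<le> int r" by (simp add: zmod_le_nonneg_dividend)
    finally show "nat ((- x) mod int m) \<le> r" by simp
  qed
  finally show ?thesis .
qed


lemma T0_nsp:
  assumes Tdef: "T = {Sp s | s. s < n \<and> m dvd s}" and md: "m dvd n" and m1: "1 \<le> m"
    and s: "s < n" "m dvd s"
  shows "nsp x = s \<longleftrightarrow> (int s - x) mod int n < int m"
proof -
  define u where "u = (- x) mod int m"
  have u0: "0 \<le> u" and um: "u < int m" unfolding u_def using m1 by auto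
  have mn: "m \<le> n" using md npos by (simp add: dvd_imp_le)
  have ns: "int (nsp x) = (x + u) mod int n"
    unfolding nsp_def T0_Lsp[OF Tdef md m1] int_bmod[OF npos] u_def using m1 by simp
  show ?thesis
  proof
    assume "nsp x = s"
    then have h: "(x + u) mod int n = int s" using ns by simp
    have "(int s - x) mod int n = ((x + u) mod int n - x) mod int n" using h by simp
    also have "\<dots> = (x + u - x) mod int n" by (rule mod_diff_left_eq)
    also have "\<dots> = u" using u0 um mn by simp
    finally show "(int s - x) mod int n < int m" using um by simp
  next
    define w where "w = (int s - x) mod int n"
    assume "(int s - x) mod int n < int m"
    then have wm: "w < int m" unfolding w_def .
    have w0: "0 \<le> w" unfolding w_def using npos by simp
    define q where "q = (int s - x) div int n"
    have dec: "int s - x = int n * q + w" unfolding q_def w_def by simp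
    obtain c where c: "n = m * c" using md by (auto simp: dvd_def)
    obtain d where d: "s = m * d" using s(2) by (auto simp: dvd_def)
    have "- x = w + int m * (int c * q - int d)" using dec c d by (simp add: algebra_simps)
    then have "u = (w + int m * (int c * q - int d)) mod int m" unfolding u_def by simp
    also have "\<dots> = w mod int m" by (rule mod_mult_self2)
    also have "\<dots> = w" using w0 wm by simp
    finally have uw: "u = w" .
    have "x + u = int s + int n * (- q)" using dec uw by simp
    then have "(x + u) mod int n = int s mod int n" by (simp only: mod_mult_self2)
    also have "\<dots> = int s" using s(1) by simp
    finally show "nsp x = s" using ns by simp
  qed
qed


lemma T0_cardI:
  assumes md: "m dvd n" and m1: "1 \<le> m" and s: "s < n"
  shows "card {i. i < n \<and> (int s - (int i + 1)) mod int n < int m} = m"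
proof -
  define I where "I = {i. i < n \<and> (int s - (int i + 1)) mod int n < int m}"
  define f where "f i = nat ((int s - (int i + 1)) mod int n)" for i
  define g where "g w = nat ((int s - 1 - int w) mod int n)" for w
  have mn: "m \<le> n" using md npos by (simp add: dvd_imp_le)
  have fi: "int (f i) = (int s - (int i + 1)) mod int n" for i unfolding f_def using npos by simp
  have gi: "int (g w) = (int s - 1 - int w) mod int n" for w unfolding g_def using npos by simp
  have gf: "g (f i) = i" if "i \<in> I" for i
  proof -
    have "int (g (f i)) = (int s - 1 - (int s - (int i + 1)) mod int n) mod int n" unfolding gi fi ..
    also have "\<dots> = (int s - 1 - (int s - (int i + 1))) mod int n" by (rule mod_diff_right_eq)
    also have "\<dots> = int i" using that unfolding I_def by simp
    finally show ?thesis by simp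
  qed
  have fg_int: "(int s - (int (g w) + 1)) mod int n = int w" if "w < m" for w
  proof -
    have "(int s - (int (g w) + 1)) mod int n = (int s - 1 - (int s - 1 - int w) mod int n) mod int n"
      unfolding gi by (simp add: algebra_simps)
    also have "\<dots> = (int s - 1 - (int s - 1 - int w)) mod int n" by (rule mod_diff_right_eq)
    also have "\<dots> = int w" using that mn by simp
    finally show ?thesis .
  qed
  have "bij_betw f I {..<m}"
  proof (rule bij_betw_byWitness[where f'=g])
    show "\<forall>a\<in>I. g (f a) = a" using gf by blast
    show "\<forall>a'\<in>{..<m}. f (g a') = a'" using fg_int unfolding f_def by simp
    show "f ` I \<subseteq> {..<m}"
    proof
      fix y assume "y \<in> f ` I"
      then obtain i where "i \<in> I" "y = f i" by blast
      then have "int y < int m" using fi unfolding I_def by simp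
      then show "y \<in> {..<m}" by simp
    qed
    show "g ` {..<m} \<subseteq> I"
    proof
      fix y assume "y \<in> g ` {..<m}"
      then obtain w where w: "w < m" "y = g w" by blast
      have "g w < n" unfolding g_def using npos by (simp add: nat_less_iff)
      then show "y \<in> I" unfolding I_def using fg_int[OF w(1)] w by simp
    qed
  qed
  then show ?thesis unfolding I_def by (simp add: bij_betw_same_card)
qed

lemma T0_face:
  assumes Tdef: "T = {Sp s | s. s < n \<and> m dvd s}" and md: "m dvd n" and m1: "1 \<le> m" and a: "a \<in> T"
  shows "card (face n T (cl a)) = m + 2"
proof -
  obtain s where a': "a = Sp s" "s < n" "m dvd s" using a Tdef by blast
  have ss: "Sp s \<in> T" using a a' by simp
  have noch: "Ch i k \<notin> T" for i k using Tdef by blast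
  have encE: "Enc i e = {}" for i e unfolding Enc_def using noch by simp
  obtain J where J: "nxt n T (Up s) = Down J" unfolding nxt_up by simp
  have Jd: "Down J \<in> darts n T" using nxt_props[of "Up s"] ss J by (simp add: darts_Up)
  have Jl: "lbl (Down J) = Sp s" using lbl_up[OF ss] J by simp
  define I where "I = {i. i < n \<and> (int s - (int i + 1)) mod int n < int m}"
  have lout: "lbl (Out i 1) = Sp (nsp (int i + 1))" for i using encE by simp
  have SE: "{d \<in> darts n T. lbl d = Sp s} = insert (Up s) (insert (Down J) ((\<lambda>i. Out i 1) ` I))"
  proof (rule set_eqI, rule iffI)
    fix d assume d: "d \<in> {d \<in> darts n T. lbl d = Sp s}"
    then have dd: "d \<in> darts n T" and dl: "lbl d = Sp s" by auto
    from dd consider i where "d = Out i 1" "i < n" | b where "b \<in> T" "d = cl b" | b where "b \<in> T" "d = opd b"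
      unfolding darts_eq by blast
    then show "d \<in> insert (Up s) (insert (Down J) ((\<lambda>i. Out i 1) ` I))"
    proof cases
      case (1 i)
      then have "nsp (int i + 1) = s" using dl lout by simp
      then have "i \<in> I" unfolding I_def using T0_nsp[OF Tdef md m1 a'(2,3)] 1 by simp
      then show ?thesis using 1 by blast
    next
      case (2 b)
      then obtain s' where "b = Sp s'" using Tdef by blast
      then show ?thesis using 2 dl by simp
    next
      case (3 b)
      then obtain s' where b: "b = Sp s'" using Tdef by blast
      then have "Sp s' \<in> T" using 3 by simp
      then obtain i where i: "Sp i \<in> T" "nxt n T (Up i) = Down s'" using down_from_up by blast
      have "lbl (Down s') = Sp i" using lbl_up[OF i(1)] i(2) by simp
      then have "i = s" using dl 3 b by simp
      then have "d = Down J" using 3 b i J by simp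
      then show ?thesis by simp
    qed
  next
    fix d assume d: "d \<in> insert (Up s) (insert (Down J) ((\<lambda>i. Out i 1) ` I))"
    then consider "d = Up s" | "d = Down J" | i where "i \<in> I" "d = Out i 1" by blast
    then show "d \<in> {d \<in> darts n T. lbl d = Sp s}"
    proof cases
      case 1 then show ?thesis using ss by (simp add: darts_Up)
    next
      case 2 then show ?thesis using Jd Jl by simp
    next
      case (3 i)
      then have i: "i < n" "(int s - (int i + 1)) mod int n < int m" unfolding I_def by auto
      then have "nsp (int i + 1) = s" using T0_nsp[OF Tdef md m1 a'(2,3)] by simp
      then show ?thesis using 3 i lout by (simp add: darts_Out)
    qed
  qed
  have fI: "finite I" unfolding I_def by simp
  have n1: "Down J \<notin> (\<lambda>i. Out i 1) ` I" by blast
  have n2: "Up s \<notin> insert (Down J) ((\<lambda>i. Out i 1) ` I)" by blast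
  have "card (insert (Up s) (insert (Down J) ((\<lambda>i. Out i 1) ` I))) = Suc (Suc (card ((\<lambda>i. Out i 1) ` I)))"
    using fI n1 n2 by (simp add: card_insert_if)
  also have "card ((\<lambda>i. Out i 1) ` I) = card I" by (rule card_image) (auto simp: inj_on_def)
  also have "card I = m" unfolding I_def by (rule T0_cardI[OF md m1 a'(2)])
  finally show ?thesis using face_cl[OF a] SE a'(1) by simp
qed

end

lemma ang_PT: "1 \<le> n \<Longrightarrow> angulation m n T \<Longrightarrow> PT n T"
  unfolding PT_def angulation_def by auto

lemma ang_count:
  assumes "1 \<le> n" "angulation m n T"
  shows "m * card T = n \<and> card (faces n T) = card T \<and> 1 \<le> card T"
proof -
  have P: "PT n T" by (rule ang_PT[OF assms])
  have "\<forall>F \<in> faces n T. card F = m + 2" using assms(2) unfolding angulation_def by blast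
  then have "m * card T = n" by (rule PT.count[OF P])
  moreover have "card (faces n T) = card T" by (rule PT.card_faces[OF P])
  moreover have "1 \<le> card T"
  proof -
    obtain i where "Sp i \<in> T" using assms(2) unfolding angulation_def by blast
    then have "T \<noteq> {}" by blast
    then show ?thesis using PT.T_fin[OF P] by (simp add: Suc_le_eq card_gt_0_iff)
  qed
  ultimately show ?thesis by blast
qed

lemma construct:
  assumes m1: "1 \<le> m" and l1: "1 \<le> l" and nml: "n = m * l"
  shows "angulation m n {Sp s | s. s < n \<and> m dvd s}"
proof -
  define T0 where "T0 = {Sp s | s. s < n \<and> m dvd s}"
  have n1: "1 \<le> n" using m1 l1 nml by simp
  have ar: "T0 \<subseteq> {a. is_arc n a}" unfolding T0_def is_arc_def by auto
  have nc: "\<forall>a\<in>T0. \<forall>b\<in>T0. a \<noteq> b \<longrightarrow> \<not> crosses n a b" unfolding T0_def by auto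
  have "Sp 0 \<in> T0" unfolding T0_def using n1 by auto
  then have sp: "\<exists>i. Sp i \<in> T0" by blast
  have P: "PT n T0" unfolding PT_def using n1 ar nc sp by blast
  have md: "m dvd n" using nml by simp
  have "\<forall>F \<in> faces n T0. card F = m + 2"
  proof
    fix F assume "F \<in> faces n T0"
    then obtain a where a: "a \<in> T0" "F = face n T0 (PT.cl n a)" unfolding PT.faces_eq[OF P] by blast
    show "card F = m + 2" using PT.T0_face[OF P T0_def md m1 a(1)] a(2) by simp
  qed
  then show ?thesis unfolding angulation_def T0_def[symmetric] using ar nc sp by blast
qed

theorem lemma3p2:
  fixes m n :: nat
  assumes "1 \<le> m" and "1 \<le> n"
  shows "((\<exists>T. angulation m n T) \<longleftrightarrow> (\<exists>l::nat. l \<ge> 1 \<and> n = m * l))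
         \<and> (\<forall>(l::nat) T. n = m * l \<longrightarrow> angulation m n T \<longrightarrow> card (faces n T) = l)"
proof (intro conjI allI impI iffI)
  assume "\<exists>T. angulation m n T"
  then obtain T where "angulation m n T" by blast
  then have "m * card T = n \<and> 1 \<le> card T" using ang_count[OF assms(2)] by blast
  then show "\<exists>l::nat. l \<ge> 1 \<and> n = m * l" by metis
next
  assume "\<exists>l::nat. l \<ge> 1 \<and> n = m * l"
  then obtain l where "l \<ge> 1" "n = m * l" by blast
  then show "\<exists>T. angulation m n T" using construct[OF assms(1)] by blast
next
  fix l T assume h: "n = m * l" "angulation m n T"
  then have c: "m * card T = n \<and> card (faces n T) = card T" using ang_count[OF assms(2)] by blast
  then have "m * card T = m * l" using h(1) by simp
  then have "card T = l" using assms(1) by simp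
  then show "card (faces n T) = l" using c by simp
qed

end
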